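(* Assume (A1)–(A4). Let $\boldsymbol\omega=\boldsymbol\omega^*(\boldsymbol\tau(\bar\tau^* ),\boldsymbol h)$ or $\boldsymbol\omega=\boldsymbol\omega^*(\boldsymbol\tau(\bar\tau^{**}),\boldsymbol h)$. Then $\|\boldsymbol\omega\|_1=O(1)$ and $\|\boldsymbol\omega\|_2^2=\Omega(m^{-1})$.
   Context: Setting: model $Y=m(X)+\sigma(X)\varepsilon$, $X\in[0,1]$, $\varepsilon$ independent of $X$ with mean 0, variance 1, PDF $f_\varepsilon$, CDF $F_\varepsilon$; data split into $m$ batches of sizes $n_i$, $n=\sum n_i$; global estimator $\widehat m(x)=\sum_{i=1}^m\sum_{j=1}^J\omega_{ij}\widehat m_i(x;\tau_{ij},h_{ij})$ with $\widehat m_i(x;\tau,h)$ the local linear quantile estimator at level $\tau$, bandwidth $h$, from batch $i$. Stacked vectors $\boldsymbol\omega,\boldsymbol\tau,\boldsymbol h\in\mathbb R^{mJ}$, $\mathbf 1_d$ all-ones vector, $\boldsymbol F_\varepsilon^{-1}(\boldsymbol\tau)=(F_\varepsilon^{-1}(\tau_{ij}))$. Notation: $\mathcal R(\boldsymbol h_i,\boldsymbol\tau_i)$ is the $J\times J$ matrix with entries $\frac{\tau_{ij}\wedge\tau_{ij'}-\tau_{ij}\tau_{ij'}}{\sqrt{h_{ij}h_{ij'}}f_\varepsilon(F_\varepsilon^{-1}(\tau_{ij}))f_\varepsilon(F_\varepsilon^{-1}(\tau_{ij'}))}$; $\mathcal R_1(\boldsymbol\tau_i)=\mathcal R(\mathbf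 1_J,\boldsymbol\tau_i)$; $\boldsymbol S(\boldsymbol\tau,\boldsymbol h)=\mathrm{diag}(n_i^{-1}\mathcal R(\boldsymbol h_i,\boldsymbol\tau_i))_{i=1}^m$. Optimal weights: $\boldsymbol\omega^*(\boldsymbol\tau,\boldsymbol h)=\frac{c_1\boldsymbol d_1-c_2\boldsymbol d_2}{c_1c_3-c_2^2}$ with $\boldsymbol d_1=\boldsymbol S^{-1}\mathbf 1_{mJ}$, $\boldsymbol d_2=\boldsymbol S^{-1}\boldsymbol F_\varepsilon^{-1}(\boldsymbol\tau)$, $c_1=\boldsymbol d_2^\top\boldsymbol F_\varepsilon^{-1}(\boldsymbol\tau)$, $c_2=\boldsymbol d_2^\top\mathbf 1_{mJ}$, $c_3=\boldsymbol d_1^\top\mathbf 1_{mJ}$. Quantile levels $\boldsymbol\tau(\bar\tau)$: entries $\bar\tau_{ij}=\bar\tau+\big(\frac{i+mj-m}{mJ}-\frac12(1+\frac1{mJ})\big)d_\tau$, with $(\bar\tau-d_\tau/2,\bar\tau+d_\tau/2)\subset(\delta_\tau,1-\delta_\tau)$; $\bar\tau^*$ solves $\mathbf 1_{mJ}^\top\boldsymbol F_\varepsilon^{-1}(\boldsymbol\tau(\bar\tau^* ))=0$; $\bar\tau^{**}$ solves $\mathbf 1_{mJ}^\top\boldsymbol S^{-1}(\boldsymbol\tau(\bar\tau^{**}),\boldsymbol h(1,\nu))\boldsymbol F_\varepsilon^{-1}(\boldsymbol\tau(\bar\tau^{**}))=0$ where $\boldsymbol h(\alpha,\nu)$ has entries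 $\alpha n_i^{-\nu}$. Assumptions. (A1) On an open $I_x\subseteq[0,1]$: $f_X,\sigma>0$; $f_X'',m'',\sigma''$ exist and continuous; $f_\varepsilon>0$ on $\mathbb R$ with $f'_\varepsilon$ continuous, bounded. (A2) $K$ Lipschitz, nonnegative, compactly supported, $\int K=1$, $\int uK=0$, $\int u^2K<\infty$, $\int K^2<\infty$, $K\ge\delta_K>0$ on some $[-s_K,s_K]$. (A3) $\sum\omega_{ij}=1$, $\sum\omega_{ij}F_\varepsilon^{-1}(\tau_{ij})=0$; constants $M_w>0$, $\delta_\tau\in(0,1/2)$, $0<\lambda_{\min}<\lambda_{\max}<\infty$ independent of $n,m$ with $\|\boldsymbol\omega\|_\infty<M_w$, $\delta_\tau<\tau_{ij}<1-\delta_\tau$, eigenvalues of each $\mathcal R_1(\boldsymbol\tau_i)$ in $(\lambda_{\min},\lambda_{\max})$. (A4) Constants $M_b>0$, $s\in(2/3,1]$ with $M_b^{-2}n^s<n_i<M_b^2n^s$; $h_{ij}=\Omega(n^{-s\nu})$ with $0<\nu<3-2/s$. Here $a_n=\Omega(b_n)$ means $a_n=O(b_n)$ and $b_n=O(a_n)$. *)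

theory Defs
  imports "HOL-Analysis.Analysis" "HOL-Library.Landau_Symbols" "Jordan_Normal_Form.Char_Poly"
begin

definition quantile :: "(real \<Rightarrow> real) \<Rightarrow> real \<Rightarrow> real" where
  "quantile F t = Inf {x. t \<le> F x}"

definition C2_on :: "real set \<Rightarrow> (real \<Rightarrow> real) \<Rightarrow> bool" where
  "C2_on I g \<longleftrightarrow> (\<exists>g1 g2. (\<forall>x\<in>I. (g has_real_derivative g1 x) (at x)
        \<and> (g1 has_real_derivative g2 x) (at x)) \<and> continuous_on I g2)"

text \<open>Matrix R(h_i, tau_i) (J x J); indices j = 1..J correspond to rows/columns 0..J-1.\<close>
definition Rmat :: "(real \<Rightarrow> real) \<Rightarrow> (real \<Rightarrow> real) \<Rightarrow> nat \<Rightarrow> (nat \<Rightarrow> real) \<Rightarrow> (nat \<Rightarrow> real) \<Rightarrow> real mat" where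
  "Rmat f F J hi ti = mat J J (\<lambda>(a, b).
     (min (ti (a+1)) (ti (b+1)) - ti (a+1) * ti (b+1)) /
     (sqrt (hi (a+1) * hi (b+1)) * f (quantile F (ti (a+1))) * f (quantile F (ti (b+1)))))"

definition R1mat :: "(real \<Rightarrow> real) \<Rightarrow> (real \<Rightarrow> real) \<Rightarrow> nat \<Rightarrow> (nat \<Rightarrow> real) \<Rightarrow> real mat" where
  "R1mat f F J ti = Rmat f F J (\<lambda>_. 1) ti"

text \<open>Stacking: entry (i,j), i = 1..m, j = 1..J, goes to position (i-1)*J + (j-1).\<close>
definition stackv :: "nat \<Rightarrow> nat \<Rightarrow> (nat \<Rightarrow> nat \<Rightarrow> real) \<Rightarrow> real vec" where
  "stackv m J v = vec (m * J) (\<lambda>p. v (p div J + 1) (p mod J + 1))"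

text \<open>S(tau,h) = diag(n_i^{-1} R(h_i, tau_i)), i = 1..m (block diagonal, mJ x mJ).\<close>
definition Smat :: "(real \<Rightarrow> real) \<Rightarrow> (real \<Rightarrow> real) \<Rightarrow> nat \<Rightarrow> nat \<Rightarrow> (nat \<Rightarrow> nat)
    \<Rightarrow> (nat \<Rightarrow> nat \<Rightarrow> real) \<Rightarrow> (nat \<Rightarrow> nat \<Rightarrow> real) \<Rightarrow> real mat" where
  "Smat f F m J nb t h = mat (m * J) (m * J) (\<lambda>(p, q).
     if p div J = q div J
     then (1 / real (nb (p div J + 1))) * (Rmat f F J (h (p div J + 1)) (t (p div J + 1)) $$ (p mod J, q mod J))
     else 0)"

definition minv :: "real mat \<Rightarrow> real mat" where
  "minv A = (THE B. B \<in> carrier_mat (dim_row A) (dim_row A)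
                 \<and> A * B = 1\<^sub>m (dim_row A) \<and> B * A = 1\<^sub>m (dim_row A))"

text \<open>Optimal weights omega^*(tau, h), returned as a function of (i,j), i = 1..m, j = 1..J.\<close>
definition omega_star :: "(real \<Rightarrow> real) \<Rightarrow> (real \<Rightarrow> real) \<Rightarrow> nat \<Rightarrow> nat \<Rightarrow> (nat \<Rightarrow> nat)
    \<Rightarrow> (nat \<Rightarrow> nat \<Rightarrow> real) \<Rightarrow> (nat \<Rightarrow> nat \<Rightarrow> real) \<Rightarrow> nat \<Rightarrow> nat \<Rightarrow> real" where
  "omega_star f F m J nb t h i j =
     (let Si = minv (Smat f F m J nb t h);
          one = stackv m J (\<lambda>_ _. 1);
          q = stackv m J (\<lambda>a b. quantile F (t a b));
          d1 = Si *\<^sub>v one;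
          d2 = Si *\<^sub>v q;
          c1 = d2 \<bullet> q;
          c2 = d2 \<bullet> one;
          c3 = d1 \<bullet> one;
          w = (1 / (c1 * c3 - c2\<^sup>2)) \<cdot>\<^sub>v (c1 \<cdot>\<^sub>v d1 - c2 \<cdot>\<^sub>v d2)
      in w $ ((i - 1) * J + (j - 1)))"

definition tau_grid :: "nat \<Rightarrow> nat \<Rightarrow> real \<Rightarrow> real \<Rightarrow> nat \<Rightarrow> nat \<Rightarrow> real" where
  "tau_grid m J dt tb i j = tb + ((real i + real m * real j - real m) / (real m * real J)
        - (1 / 2) * (1 + 1 / (real m * real J))) * dt"

definition ntot :: "nat \<Rightarrow> (nat \<Rightarrow> nat) \<Rightarrow> nat" where
  "ntot m nb = (\<Sum>i = 1..m. nb i)"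

end

theory Submission
  imports Defs
begin


lemma F_diff:
  fixes f F :: "real \<Rightarrow> real"
  assumes F_cdf: "\<forall>x. (f has_integral F x) {..x}" and xy: "x \<le> y"
  shows "(f has_integral (F y - F x)) {x..y}"
proof -
  have 1: "((\<lambda>z. if z \<in> {..y} then f z else 0) has_integral F y) UNIV"
    using F_cdf has_integral_restrict_UNIV by blast
  have 2: "((\<lambda>z. if z \<in> {..x} then f z else 0) has_integral F x) UNIV"
    using F_cdf has_integral_restrict_UNIV by blast
  have "((\<lambda>z. (if z \<in> {..y} then f z else 0) - (if z \<in> {..x} then f z else 0)) has_integral F y - F x) UNIV"
    using has_integral_diff[OF 1 2] .
  note 3 = this
  have "((\<lambda>z. if z \<in> {x..y} then f z else 0) has_integral F y - F x) UNIV"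
    by (rule has_integral_spike[where S="{x}", OF _ _ 3]) (use xy in auto)
  then show ?thesis using has_integral_restrict_UNIV by blast
qed

locale dens =
  fixes f F :: "real \<Rightarrow> real"
  assumes f_pos: "\<forall>x. f x > 0"
    and F_cdf: "\<forall>x. (f has_integral F x) {..x}"
    and f_dens: "(f has_integral 1) UNIV"
    and f_cont: "continuous_on UNIV f"
begin

lemma Fd: "x \<le> y \<Longrightarrow> (f has_integral (F y - F x)) {x..y}"
  using F_diff[OF F_cdf] .

lemma F_strict: assumes "x < y" shows "F x < F y"
proof -
  have "\<exists>z\<in>{x..y}. \<forall>u\<in>{x..y}. f z \<le> f u"
    by (rule continuous_attains_inf) (use assms continuous_on_subset[OF f_cont] in auto)
  then obtain z where z: "\<And>u. u \<in> {x..y} \<Longrightarrow> f z \<le> f u" by blast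
  have c: "((\<lambda>_. f z) has_integral (y - x) * f z) {x..y}"
    using has_integral_const_real[of "f z" x y] assms by simp
  have "(y - x) * f z \<le> F y - F x"
    by (rule has_integral_le[OF c Fd]) (use z assms in auto)
  moreover have "(y - x) * f z > 0" using assms f_pos by simp
  ultimately show ?thesis by simp
qed

lemma F_mono: "x \<le> y \<Longrightarrow> F x \<le> F y"
  using F_strict by (cases "x = y") (auto simp: order.order_iff_strict intro: less_imp_le)

lemma F_lip:
  assumes M: "\<forall>u\<in>{a..b}. f u \<le> M" and x: "x \<in> {a..b}" and y: "y \<in> {a..b}"
  shows "\<bar>F y - F x\<bar> \<le> M * \<bar>y - x\<bar>"
proof -
  have gen: "F v - F u \<le> M * (v - u)" if "u \<le> v" "u \<in> {a..b}" "v \<in> {a..b}" for u v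
  proof -
    have c: "((\<lambda>_. M) has_integral (v - u) * M) {u..v}"
      using has_integral_const_real[of M u v] that by simp
    have "F v - F u \<le> (v - u) * M"
      by (rule has_integral_le[OF Fd c]) (use that M in auto)
    then show ?thesis using that by (simp add: mult.commute)
  qed
  show ?thesis
  proof (cases "x \<le> y")
    case True then show ?thesis using gen[OF True x y] F_mono[OF True] by simp
  next
    case False then show ?thesis using gen[of y x] x y F_mono[of y x] by simp
  qed
qed

lemma F_nonneg: "0 \<le> F x"
  by (rule has_integral_nonneg[OF spec[OF F_cdf, of x]]) (use f_pos less_imp_le in blast)

lemma F_le1: "F x \<le> 1"
  by (rule has_integral_subset_le[OF _ spec[OF F_cdf, of x] f_dens]) (use f_pos less_imp_le in auto)

lemma F_tails: assumes e: "e > 0" shows "\<exists>a b. F a < e \<and> 1 - e < F b"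
proof -
  have nc: "\<not> (\<exists>a b. (UNIV::real set) = cbox a b)"
    by (metis bounded_cbox not_bounded_UNIV)
  obtain B where B: "B > 0" and HB: "\<forall>a b. ball 0 B \<subseteq> cbox a b \<longrightarrow>
      (\<exists>z. ((\<lambda>x. if x \<in> UNIV then f x else 0) has_integral z) (cbox a b) \<and> norm (z - 1) < e)"
    using has_integral_altD[OF f_dens nc e] by metis
  have "ball 0 B \<subseteq> cbox (-B) B" by (auto simp: dist_real_def)
  from HB[rule_format, OF this] obtain z where z: "(f has_integral z) {-B..B}" "\<bar>z - 1\<bar> < e" by auto
  have "z = F B - F (-B)" using has_integral_unique[OF z(1) Fd] B by simp
  then show ?thesis using z(2) F_nonneg[of "-B"] F_le1[of B] by (intro exI[of _ "-B"] exI[of _ B]) auto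
qed

lemma quantile_char:
  assumes ab: "a \<le> b" and t: "F a < t" "t < F b"
  shows "quantile F t \<in> {a..b} \<and> F (quantile F t) = t"
proof -
  have "\<exists>z\<in>{a..b}. \<forall>u\<in>{a..b}. f u \<le> f z"
    by (rule continuous_attains_sup) (use ab continuous_on_subset[OF f_cont] in auto)
  then obtain M where M: "\<forall>u\<in>{a..b}. f u \<le> M" by blast
  have "a \<in> {a..b}" using ab by simp
  then have "f a \<le> M" using M by blast
  then have M0: "0 \<le> M" using f_pos[rule_format, of a] by linarith
  have "M-lipschitz_on {a..b} F"
  proof (rule lipschitz_onI)
    fix x y assume x: "x \<in> {a..b}" and y: "y \<in> {a..b}"
    show "dist (F x) (F y) \<le> M * dist x y"
      using F_lip[OF M y x] by (simp add: dist_real_def)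
  qed (rule M0)
  then have "continuous_on {a..b} F" by (rule lipschitz_on_continuous_on)
  then obtain x0 where x0: "a \<le> x0" "x0 \<le> b" "F x0 = t"
    using IVT'[of F a t b] t ab by auto
  have iff: "t \<le> F x \<longleftrightarrow> x0 \<le> x" for x
  proof
    assume tx: "t \<le> F x"
    show "x0 \<le> x"
    proof (rule ccontr)
      assume "\<not> x0 \<le> x"
      then have "x < x0" by simp
      from F_strict[OF this] show False using x0 tx by simp
    qed
  next
    assume "x0 \<le> x" then show "t \<le> F x" using F_mono[of x0 x] x0 by simp
  qed
  have "{x. t \<le> F x} = {x0..}" using iff by auto
  then have "quantile F t = x0" unfolding quantile_def by simp
  then show ?thesis using x0 by simp
qed

end




lemma bb_lower:
  fixes t y :: "nat \<Rightarrow> real" and J :: nat and g :: real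
  assumes J: "J \<ge> 1" and g: "g > 0" and t0: "g \<le> t 0"
    and st: "\<And>a. Suc a < J \<Longrightarrow> t a + g \<le> t (Suc a)"
    and tl: "t (J - 1) + g \<le> 1"
  shows "g / 4 * (\<Sum>a<J. (y a)\<^sup>2) \<le> (\<Sum>a<J. \<Sum>b<J. (min (t a) (t b) - t a * t b) * y a * y b)"
proof -
  define tt where "tt k = (if k < J then t k else 1)" for k
  define \<delta> where "\<delta> k = tt k - (if k = 0 then 0 else tt (k - 1))" for k
  define S where "S k = (\<Sum>a<J. if k \<le> a then y a else 0)" for k
  define T where "T = (\<Sum>a<J. y a * t a)"
  define c where "c k = S k - T" for k
  have mono: "t a \<le> t b" if "a \<le> b" "b < J" for a b
    using that
  proof (induction b)
    case 0 then show ?case by simp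
  next
    case (Suc b)
    show ?case
    proof (cases "a = Suc b")
      case False
      then have "t a \<le> t b" using Suc by simp
      then show ?thesis using st[of b] Suc g by simp
    qed simp
  qed
  have tmin: "t (min a b) = min (t a) (t b)" if "a < J" "b < J" for a b
    using mono[of b a] mono[of a b] that by (auto simp: min_def)
  have tel: "(\<Sum>k<Suc a. \<delta> k) = tt a" if "a \<le> J" for a
    using that by (induction a) (auto simp: \<delta>_def)
  have s1: "(\<Sum>k<Suc J. \<delta> k) = 1" using tel[of J] by (simp add: tt_def)
  have s2: "(\<Sum>k<Suc J. if k \<le> a then \<delta> k else 0) = t a" if "a < J" for a
  proof -
    have "(\<Sum>k<Suc J. if k \<le> a then \<delta> k else 0) = (\<Sum>k\<in>{k\<in>{..<Suc J}. k \<le> a}. \<delta> k)"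
      by (rule sum.inter_filter[symmetric]) simp
    also have "{k\<in>{..<Suc J}. k \<le> a} = {..<Suc a}" using that by auto
    finally show ?thesis using tel[of a] that by (simp add: tt_def)
  qed
  have s3: "(\<Sum>k<Suc J. \<delta> k * S k) = T"
  proof -
    have "(\<Sum>k<Suc J. \<delta> k * S k) = (\<Sum>k<Suc J. \<Sum>a<J. y a * (if k \<le> a then \<delta> k else 0))"
      by (simp add: S_def sum_distrib_left mult.commute if_distrib cong: if_cong)
    also have "\<dots> = (\<Sum>a<J. y a * (\<Sum>k<Suc J. if k \<le> a then \<delta> k else 0))"
      by (subst sum.swap) (simp add: sum_distrib_left)
    also have "\<dots> = T" unfolding T_def by (intro sum.cong refl) (metis lessThan_iff s2)
    finally show ?thesis .
  qed
  have s4: "(\<Sum>k<Suc J. \<delta> k * (S k)\<^sup>2) = (\<Sum>a<J. \<Sum>b<J. min (t a) (t b) * y a * y b)"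
  proof -
    have sq: "(S k)\<^sup>2 = (\<Sum>a<J. \<Sum>b<J. if k \<le> min a b then y a * y b else 0)" for k
      by (simp add: S_def power2_eq_square sum_product if_distrib cong: if_cong)
        (intro sum.cong refl, auto)
    have "(\<Sum>k<Suc J. \<delta> k * (S k)\<^sup>2) = (\<Sum>k<Suc J. \<Sum>a<J. \<Sum>b<J. y a * y b * (if k \<le> min a b then \<delta> k else 0))"
      unfolding sq by (simp add: sum_distrib_left) (intro sum.cong refl, auto)
    also have "\<dots> = (\<Sum>a<J. \<Sum>k<Suc J. \<Sum>b<J. y a * y b * (if k \<le> min a b then \<delta> k else 0))"
      by (rule sum.swap)
    also have "\<dots> = (\<Sum>a<J. \<Sum>b<J. \<Sum>k<Suc J. y a * y b * (if k \<le> min a b then \<delta> k else 0))"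
      by (intro sum.cong refl sum.swap)
    also have "\<dots> = (\<Sum>a<J. \<Sum>b<J. y a * y b * t (min a b))"
      by (intro sum.cong refl) (simp only: sum_distrib_left[symmetric], subst s2, auto)
    also have "\<dots> = (\<Sum>a<J. \<Sum>b<J. min (t a) (t b) * y a * y b)"
      by (intro sum.cong refl) (simp add: tmin)
    finally show ?thesis .
  qed
  have TT: "(\<Sum>a<J. \<Sum>b<J. t a * t b * y a * y b) = T\<^sup>2"
    by (simp add: T_def power2_eq_square sum_product) (intro sum.cong refl, simp)
  have key: "(\<Sum>k<Suc J. \<delta> k * (c k)\<^sup>2) = (\<Sum>a<J. \<Sum>b<J. (min (t a) (t b) - t a * t b) * y a * y b)"
  proof -
    have "(\<Sum>k<Suc J. \<delta> k * (c k)\<^sup>2) = (\<Sum>k<Suc J. \<delta> k * (S k)\<^sup>2) - 2 * T * (\<Sum>k<Suc J. \<delta> k * S k) + T\<^sup>2 * (\<Sum>k<Suc J. \<delta> k)"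
      by (simp add: c_def power2_diff sum.distrib sum_subtractf sum_distrib_left sum_distrib_right algebra_simps)
    also have "\<dots> = (\<Sum>a<J. \<Sum>b<J. min (t a) (t b) * y a * y b) - T\<^sup>2"
      by (simp only: s1 s3 s4) (simp add: power2_eq_square)
    also have "\<dots> = (\<Sum>a<J. \<Sum>b<J. (min (t a) (t b) - t a * t b) * y a * y b)"
      by (simp add: TT[symmetric] sum_subtractf[symmetric] algebra_simps)
    finally show ?thesis .
  qed
  have dg: "g \<le> \<delta> k" if kJ: "k < Suc J" for k
  proof -
    consider "k = 0" | "0 < k" "k < J" | "k = J" using kJ by (metis less_Suc_eq neq0_conv)
    then show ?thesis
    proof cases
      case 1 then show ?thesis using J t0 by (auto simp: \<delta>_def tt_def)
    next
      case 2 then show ?thesis using st[of "k - 1"] by (auto simp: \<delta>_def tt_def)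
    next
      case 3 then show ?thesis using J tl by (auto simp: \<delta>_def tt_def)
    qed
  qed
  have l1: "g * (\<Sum>k<Suc J. (c k)\<^sup>2) \<le> (\<Sum>k<Suc J. \<delta> k * (c k)\<^sup>2)"
    unfolding sum_distrib_left by (intro sum_mono mult_right_mono) (auto simp: dg simp del: lessThan_Suc)
  have yc: "y a = c a - c (Suc a)" if "a < J" for a
  proof -
    have "S a = y a + S (Suc a)" unfolding S_def
      using that by (simp add: sum.remove[of "{..<J}" a] sum.distrib[symmetric]) (intro sum.cong, auto)
    then show ?thesis by (simp add: c_def)
  qed
  have "(\<Sum>a<J. (y a)\<^sup>2) \<le> (\<Sum>a<J. 2 * (c a)\<^sup>2 + 2 * (c (Suc a))\<^sup>2)"
  proof (intro sum_mono)
    fix a assume "a \<in> {..<J}"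
    then show "(y a)\<^sup>2 \<le> 2 * (c a)\<^sup>2 + 2 * (c (Suc a))\<^sup>2"
    proof -
      have e1: "(y a)\<^sup>2 = (c a)\<^sup>2 - 2 * (c a * c (Suc a)) + (c (Suc a))\<^sup>2"
        using yc[of a] \<open>a \<in> {..<J}\<close> by (simp add: power2_diff)
      have e2: "0 \<le> (c a)\<^sup>2 + 2 * (c a * c (Suc a)) + (c (Suc a))\<^sup>2"
      proof -
        have "(c a + c (Suc a))\<^sup>2 = (c a)\<^sup>2 + 2 * (c a * c (Suc a)) + (c (Suc a))\<^sup>2"
          by (simp add: power2_sum)
        then show ?thesis using zero_le_power2[of "c a + c (Suc a)"] by linarith
      qed
      show ?thesis using e1 e2 by linarith
    qed
  qed
  also have "\<dots> = 2 * (\<Sum>a<J. (c a)\<^sup>2) + 2 * (\<Sum>a<J. (c (Suc a))\<^sup>2)"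
    by (simp add: sum.distrib sum_distrib_left)
  also have "\<dots> \<le> 4 * (\<Sum>k<Suc J. (c k)\<^sup>2)"
    using sum.lessThan_Suc_shift[of "\<lambda>k. (c k)\<^sup>2" J] sum.lessThan_Suc[of "\<lambda>k. (c k)\<^sup>2" J]
      zero_le_power2[of "c 0"] zero_le_power2[of "c J"]
    by linarith
  finally have "(\<Sum>a<J. (y a)\<^sup>2) \<le> 4 * (\<Sum>k<Suc J. (c k)\<^sup>2)" .
  then have "g / 4 * (\<Sum>a<J. (y a)\<^sup>2) \<le> g * (\<Sum>k<Suc J. (c k)\<^sup>2)" using g by simp
  with l1 key show ?thesis by linarith
qed




lemma sum_blocks:
  fixes g :: "nat \<Rightarrow> real" and m J :: nat
  shows "(\<Sum>p<m*J. g p) = (\<Sum>i<m. \<Sum>a<J. g (i*J + a))"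
proof -
  have "(\<Sum>p<m*J. g p) = (\<Sum>i<m. sum g {i*J..<i*J+J})" using sum.nat_group[of g J m] by simp
  also have "\<dots> = (\<Sum>i<m. \<Sum>a<J. g (i*J + a))"
  proof -
    have sh: "sum g {i*J..<i*J+J} = (\<Sum>a<J. g (i*J + a))" for i
    proof -
      have "sum g {0 + i*J..<J + i*J} = (\<Sum>a=0..<J. g (a + i*J))" by (rule sum.shift_bounds_nat_ivl)
      then show ?thesis by (simp add: atLeast0LessThan add.commute)
    qed
    show ?thesis by (simp add: sh)
  qed
  finally show ?thesis .
qed

lemma sp_mv:
  fixes A :: "real mat" and x y :: "real vec"
  assumes "A \<in> carrier_mat N N" "x \<in> carrier_vec N" "y \<in> carrier_vec N"
  shows "scalar_prod x (A *\<^sub>v y) = (\<Sum>p<N. \<Sum>q<N. A $$ (p,q) * vec_index x p * vec_index y q)"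
  using assms
  by (auto simp: scalar_prod_def atLeast0LessThan row_def sum_distrib_left intro!: sum.cong)

lemma Smat_carrier: "Smat f F m J nb t h \<in> carrier_mat (m*J) (m*J)"
  unfolding Smat_def by simp

lemma div_mod_block: "a < (J::nat) \<Longrightarrow> (i*J + a) div J = i \<and> (i*J + a) mod J = a"
  by (simp add: add.commute)

lemma Smat_block:
  fixes X Y :: "nat \<Rightarrow> real"
  shows "(\<Sum>p<m*J. \<Sum>q<m*J. Smat f F m J nb t h $$ (p,q) * X p * Y q)
    = (\<Sum>i<m. (1 / real (nb (i+1))) * (\<Sum>a<J. \<Sum>b<J.
          Rmat f F J (h (i+1)) (t (i+1)) $$ (a,b) * X (i*J+a) * Y (i*J+b)))"
proof -
  have "(\<Sum>p<m*J. \<Sum>q<m*J. Smat f F m J nb t h $$ (p,q) * X p * Y q)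
     = (\<Sum>i<m. \<Sum>a<J. \<Sum>i'<m. \<Sum>b<J. Smat f F m J nb t h $$ (i*J+a,i'*J+b) * X (i*J+a) * Y (i'*J+b))"
    by (simp add: sum_blocks)
  also have "\<dots> = (\<Sum>i<m. \<Sum>a<J. \<Sum>i'<m. if i' = i then (\<Sum>b<J. (1 / real (nb (i+1))) *
          Rmat f F J (h (i+1)) (t (i+1)) $$ (a,b) * X (i*J+a) * Y (i*J+b)) else 0)"
  proof (intro sum.cong refl)
    fix i a i' assume i: "i \<in> {..<m}" and a: "a \<in> {..<J}" and i': "i' \<in> {..<m}"
    have lt: "i*J + a < m*J" if "i < m" "a < J" for i a
    proof -
      have "i*J + a < i*J + J" using that by simp
      also have "\<dots> = Suc i * J" by simp
      also have "\<dots> \<le> m * J" using that by (intro mult_right_mono) auto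
      finally show ?thesis .
    qed
    show "(\<Sum>b<J. Smat f F m J nb t h $$ (i*J+a,i'*J+b) * X (i*J+a) * Y (i'*J+b)) =
      (if i' = i then (\<Sum>b<J. (1 / real (nb (i+1))) *
          Rmat f F J (h (i+1)) (t (i+1)) $$ (a,b) * X (i*J+a) * Y (i*J+b)) else 0)"
      using i a i' lt[of i a] lt[of i'] div_mod_block[of a J i]
      by (auto simp: Smat_def div_mod_block intro!: sum.cong)
  qed
  also have "\<dots> = (\<Sum>i<m. (1 / real (nb (i+1))) * (\<Sum>a<J. \<Sum>b<J.
          Rmat f F J (h (i+1)) (t (i+1)) $$ (a,b) * X (i*J+a) * Y (i*J+b)))"
    by (simp add: sum.delta' sum_distrib_left algebra_simps)
  finally show ?thesis .
qed




lemma Rmat_entry: "a < J \<Longrightarrow> b < J \<Longrightarrow> Rmat f F J hi ti $$ (a,b) =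
     (min (ti (a+1)) (ti (b+1)) - ti (a+1) * ti (b+1)) /
     (sqrt (hi (a+1) * hi (b+1)) * f (quantile F (ti (a+1))) * f (quantile F (ti (b+1))))"
  unfolding Rmat_def by simp

lemma bb_range: "0 < u \<Longrightarrow> u < 1 \<Longrightarrow> 0 < v \<Longrightarrow> v < 1 \<Longrightarrow>
   0 \<le> min u v - u * v \<and> min u v - u * v \<le> (1::real)"
proof -
  assume a: "0 < u" "u < 1" "0 < v" "v < 1"
  have uv: "u * v \<le> u" "u * v \<le> v" using a by (simp_all add: mult_left_le mult_le_cancel_right1 less_imp_le)
  have p: "0 \<le> u * v" using a by simp
  show ?thesis
  proof (cases "u \<le> v")
    case True then have "min u v = u" by simp
    then show ?thesis using a p uv by linarith
  next
    case False then have "min u v = v" by simp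
    then show ?thesis using a p uv by linarith
  qed
qed

lemma block_bounds:
  fixes X :: "nat \<Rightarrow> real" and ti hi :: "nat \<Rightarrow> real" and f F :: "real \<Rightarrow> real"
  assumes J: "J \<ge> 1" and g: "g > 0"
    and tg1: "g \<le> ti 1" and tgs: "\<And>j. 1 \<le> j \<Longrightarrow> j < J \<Longrightarrow> ti j + g \<le> ti (j+1)"
    and tgl: "ti J + g \<le> 1"
    and tpos: "\<And>j. j \<in> {1..J} \<Longrightarrow> 0 < ti j \<and> ti j < 1"
    and fb: "\<And>j. j \<in> {1..J} \<Longrightarrow> fmin \<le> f (quantile F (ti j)) \<and> f (quantile F (ti j)) \<le> fmax"
    and fmin: "fmin > 0"
    and hb: "\<And>j. j \<in> {1..J} \<Longrightarrow> hl \<le> hi j \<and> hi j \<le> hu" and hl: "hl > 0"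
  shows "g / (4 * hu * fmax\<^sup>2) * (\<Sum>a<J. (X a)\<^sup>2) \<le> (\<Sum>a<J. \<Sum>b<J. Rmat f F J hi ti $$ (a,b) * X a * X b)
       \<and> (\<Sum>a<J. \<Sum>b<J. Rmat f F J hi ti $$ (a,b) * X a * X b) \<le> real J / (hl * fmin\<^sup>2) * (\<Sum>a<J. (X a)\<^sup>2)"
proof -
  define fv where "fv j = f (quantile F (ti j))" for j
  define y where "y a = X a / (sqrt (hi (a+1)) * fv (a+1))" for a
  define B where "B a b = min (ti (a+1)) (ti (b+1)) - ti (a+1) * ti (b+1)" for a b
  have fvp: "fv (a+1) > 0" "fmin \<le> fv (a+1)" "fv (a+1) \<le> fmax" if "a < J" for a
    using fb[of "a+1"] fmin that by (auto simp: fv_def)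
  have hp: "hi (a+1) > 0" "hl \<le> hi (a+1)" "hi (a+1) \<le> hu" if "a < J" for a
    using hb[of "a+1"] hl that by auto
  have eq: "Rmat f F J hi ti $$ (a,b) * X a * X b = B a b * y a * y b" if "a < J" "b < J" for a b
  proof -
    have "sqrt (hi (a+1) * hi (b+1)) = sqrt (hi (a+1)) * sqrt (hi (b+1))" by (rule real_sqrt_mult)
    moreover have "sqrt (hi (a+1)) > 0" "sqrt (hi (b+1)) > 0" using hp that by auto
    ultimately show ?thesis using that fvp[of a] fvp[of b]
      by (simp add: Rmat_entry y_def B_def fv_def field_simps)
  qed
  have ysq: "(y a)\<^sup>2 = (X a)\<^sup>2 / (hi (a+1) * (fv (a+1))\<^sup>2)" if "a < J" for a
    using that hp[of a] by (simp add: y_def power_divide power_mult_distrib)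
  have Q: "(\<Sum>a<J. \<Sum>b<J. Rmat f F J hi ti $$ (a,b) * X a * X b) = (\<Sum>a<J. \<Sum>b<J. B a b * y a * y b)"
    by (intro sum.cong refl) (simp add: eq)
  have fmax: "fmax > 0" using fvp[of 0] J by linarith
  have hu: "hu > 0" using hp[of 0] J by linarith
  have low1: "g / 4 * (\<Sum>a<J. (y a)\<^sup>2) \<le> (\<Sum>a<J. \<Sum>b<J. B a b * y a * y b)"
    unfolding B_def
    by (rule bb_lower[where t="\<lambda>a. ti (a+1)"]) (use J g tg1 tgl tgs[of "Suc _"] in auto)
  have low2: "(\<Sum>a<J. (X a)\<^sup>2) / (hu * fmax\<^sup>2) \<le> (\<Sum>a<J. (y a)\<^sup>2)"
    unfolding sum_divide_distrib
  proof (intro sum_mono)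
    fix a assume a: "a \<in> {..<J}"
    have "hi (a+1) * (fv (a+1))\<^sup>2 \<le> hu * fmax\<^sup>2"
      using hp[of a] fvp[of a] a by (intro mult_mono power_mono) auto
    moreover have "0 < hi (a+1) * (fv (a+1))\<^sup>2" using hp[of a] fvp[of a] a by simp
    ultimately show "(X a)\<^sup>2 / (hu * fmax\<^sup>2) \<le> (y a)\<^sup>2"
      using a by (simp add: ysq) (intro divide_left_mono, auto)
  qed
  have lower: "g / (4 * hu * fmax\<^sup>2) * (\<Sum>a<J. (X a)\<^sup>2) \<le> (\<Sum>a<J. \<Sum>b<J. B a b * y a * y b)"
  proof -
    have "g / (4 * hu * fmax\<^sup>2) * (\<Sum>a<J. (X a)\<^sup>2) = g / 4 * ((\<Sum>a<J. (X a)\<^sup>2) / (hu * fmax\<^sup>2))"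
      by simp
    also have "\<dots> \<le> g / 4 * (\<Sum>a<J. (y a)\<^sup>2)" using low2 g by (intro mult_left_mono) auto
    finally show ?thesis using low1 by linarith
  qed
  have up1: "(\<Sum>a<J. \<Sum>b<J. B a b * y a * y b) \<le> (\<Sum>a<J. \<Sum>b<J. ((y a)\<^sup>2 + (y b)\<^sup>2) / 2)"
  proof (intro sum_mono)
    fix a b assume a: "a \<in> {..<J}" and b: "b \<in> {..<J}"
    have Br: "0 \<le> B a b" "B a b \<le> 1" using bb_range[of "ti (a+1)" "ti (b+1)"] tpos[of "a+1"] tpos[of "b+1"] a b
      by (auto simp: B_def)
    have "B a b * y a * y b \<le> B a b * \<bar>y a * y b\<bar>" using Br by (simp add: mult.assoc mult_left_mono)
    also have "\<dots> \<le> \<bar>y a * y b\<bar>" using Br by (simp add: mult_left_le_one_le)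
    also have "\<dots> \<le> ((y a)\<^sup>2 + (y b)\<^sup>2) / 2"
    proof -
      have "0 \<le> (\<bar>y a\<bar> - \<bar>y b\<bar>)\<^sup>2" by simp
      then have "2 * (\<bar>y a\<bar> * \<bar>y b\<bar>) \<le> \<bar>y a\<bar>\<^sup>2 + \<bar>y b\<bar>\<^sup>2" by (simp add: power2_diff)
      then show ?thesis by (simp add: abs_mult)
    qed
    finally show "B a b * y a * y b \<le> ((y a)\<^sup>2 + (y b)\<^sup>2) / 2" .
  qed
  have up2: "(\<Sum>a<J. \<Sum>b<J. ((y a)\<^sup>2 + (y b)\<^sup>2) / 2) = real J * (\<Sum>a<J. (y a)\<^sup>2)"
    by (simp add: sum.distrib sum_divide_distrib[symmetric] sum.swap[of "\<lambda>a b. (y b)\<^sup>2"] field_simps sum_distrib_left)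
  have up3: "(\<Sum>a<J. (y a)\<^sup>2) \<le> (\<Sum>a<J. (X a)\<^sup>2) / (hl * fmin\<^sup>2)"
    unfolding sum_divide_distrib
  proof (intro sum_mono)
    fix a assume a: "a \<in> {..<J}"
    have "hl * fmin\<^sup>2 \<le> hi (a+1) * (fv (a+1))\<^sup>2"
      using hp[of a] fvp[of a] a hl fmin by (intro mult_mono power_mono) auto
    moreover have "0 < hl * fmin\<^sup>2" using hl fmin by simp
    ultimately show "(y a)\<^sup>2 \<le> (X a)\<^sup>2 / (hl * fmin\<^sup>2)"
      using a by (simp add: ysq) (intro divide_left_mono, auto)
  qed
  have upper: "(\<Sum>a<J. \<Sum>b<J. B a b * y a * y b) \<le> real J / (hl * fmin\<^sup>2) * (\<Sum>a<J. (X a)\<^sup>2)"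
  proof -
    have "(\<Sum>a<J. \<Sum>b<J. B a b * y a * y b) \<le> real J * (\<Sum>a<J. (y a)\<^sup>2)" using up1 up2 by simp
    also have "\<dots> \<le> real J * ((\<Sum>a<J. (X a)\<^sup>2) / (hl * fmin\<^sup>2))" using up3 by (intro mult_left_mono) auto
    finally show ?thesis by simp
  qed
  show ?thesis using lower upper Q by simp
qed




lemma sp_self: "x \<in> carrier_vec N \<Longrightarrow> scalar_prod x x = (\<Sum>p<N. (vec_index x p)\<^sup>2 :: real)"
  by (simp add: scalar_prod_def atLeast0LessThan power2_eq_square)

lemma Smat_quad:
  fixes x :: "real vec" and t h :: "nat \<Rightarrow> nat \<Rightarrow> real" and nb :: "nat \<Rightarrow> nat"
  assumes J: "J \<ge> 1" and g: "g > 0"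
    and tg: "\<forall>i\<in>{1..m}. g \<le> t i 1 \<and> t i J + g \<le> 1 \<and> (\<forall>j. 1 \<le> j \<longrightarrow> j < J \<longrightarrow> t i j + g \<le> t i (j+1))"
    and tpos: "\<forall>i\<in>{1..m}. \<forall>j\<in>{1..J}. 0 < t i j \<and> t i j < 1"
    and fb: "\<forall>i\<in>{1..m}. \<forall>j\<in>{1..J}. fmin \<le> f (quantile F (t i j)) \<and> f (quantile F (t i j)) \<le> fmax"
    and fmin: "fmin > 0"
    and hb: "\<forall>i\<in>{1..m}. \<forall>j\<in>{1..J}. hl \<le> h i j \<and> h i j \<le> hu" and hl: "hl > 0"
    and nbb: "\<forall>i\<in>{1..m}. nl \<le> real (nb i) \<and> real (nb i) \<le> nh" and nl: "nl > 0"
    and x: "x \<in> carrier_vec (m*J)"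
  shows "g / (4 * hu * fmax\<^sup>2) / nh * scalar_prod x x \<le> scalar_prod x (Smat f F m J nb t h *\<^sub>v x)
     \<and> scalar_prod x (Smat f F m J nb t h *\<^sub>v x) \<le> real J / (hl * fmin\<^sup>2) / nl * scalar_prod x x"
proof -
  define X where "X p = vec_index x p" for p
  define L where "L = g / (4 * hu * fmax\<^sup>2)"
  define U where "U = real J / (hl * fmin\<^sup>2)"
  define Q where "Q i = (\<Sum>a<J. \<Sum>b<J. Rmat f F J (h (i+1)) (t (i+1)) $$ (a,b) * X (i*J+a) * X (i*J+b))" for i
  define W where "W i = (\<Sum>a<J. (X (i*J+a))\<^sup>2)" for i
  have xSx: "scalar_prod x (Smat f F m J nb t h *\<^sub>v x) = (\<Sum>i<m. (1 / real (nb (i+1))) * Q i)"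
    using sp_mv[OF Smat_carrier x x] Smat_block[of f F m J nb t h X X] by (simp add: X_def Q_def)
  have xx: "scalar_prod x x = (\<Sum>i<m. W i)"
    using sp_self[OF x] sum_blocks[of "\<lambda>p. (X p)\<^sup>2" m J] by (simp add: X_def W_def)
  have blk: "L * W i \<le> Q i \<and> Q i \<le> U * W i" if i: "i < m" for i
    unfolding L_def U_def W_def Q_def
  proof (rule block_bounds[OF J g])
    have ii: "i+1 \<in> {1..m}" using i by simp
    show "g \<le> t (i+1) 1" "t (i+1) J + g \<le> 1" using tg ii by auto
    show "\<And>j. 1 \<le> j \<Longrightarrow> j < J \<Longrightarrow> t (i+1) j + g \<le> t (i+1) (j+1)" using tg ii by blast
    show "\<And>j. j \<in> {1..J} \<Longrightarrow> 0 < t (i+1) j \<and> t (i+1) j < 1" using tpos ii by blast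
    show "\<And>j. j \<in> {1..J} \<Longrightarrow> fmin \<le> f (quantile F (t (i+1) j)) \<and> f (quantile F (t (i+1) j)) \<le> fmax"
      using fb ii by blast
    show "\<And>j. j \<in> {1..J} \<Longrightarrow> hl \<le> h (i+1) j \<and> h (i+1) j \<le> hu" using hb ii by blast
  qed (use fmin hl in auto)
  have Wn: "0 \<le> W i" for i unfolding W_def by (intro sum_nonneg) auto
  have lo: "L / nh * W i \<le> (1 / real (nb (i+1))) * Q i" if i: "i < m" for i
  proof -
    have ii: "i+1 \<in> {1..m}" using i by simp
    have "1 \<in> {1..J}" using J by simp
    then have hu: "hu > 0" using hb ii hl by force
    have L0: "0 \<le> L" using g hu unfolding L_def by simp
    have nb: "nl \<le> real (nb (i+1))" "real (nb (i+1)) \<le> nh" using nbb ii by auto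
    have "L / nh * W i = (1 / nh) * (L * W i)" by simp
    also have "\<dots> \<le> (1 / real (nb (i+1))) * (L * W i)"
      using nb nl L0 Wn[of i] by (intro mult_right_mono divide_left_mono) auto
    also have "\<dots> \<le> (1 / real (nb (i+1))) * Q i"
      using blk[OF i] nb nl by (intro mult_left_mono) auto
    finally show ?thesis .
  qed
  have upb: "(1 / real (nb (i+1))) * Q i \<le> U / nl * W i" if i: "i < m" for i
  proof -
    have ii: "i+1 \<in> {1..m}" using i by simp
    have U0: "0 \<le> U" using hl unfolding U_def by simp
    have nb: "nl \<le> real (nb (i+1))" "real (nb (i+1)) \<le> nh" using nbb ii by auto
    have "(1 / real (nb (i+1))) * Q i \<le> (1 / real (nb (i+1))) * (U * W i)"
      using blk[OF i] nb nl by (intro mult_left_mono) auto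
    also have "\<dots> \<le> (1 / nl) * (U * W i)"
      using nb nl U0 Wn[of i] by (intro mult_right_mono divide_left_mono) auto
    finally show ?thesis by simp
  qed
  have "L / nh * scalar_prod x x \<le> scalar_prod x (Smat f F m J nb t h *\<^sub>v x)"
    unfolding xSx xx sum_distrib_left by (intro sum_mono) (rule lo, simp)
  moreover have "scalar_prod x (Smat f F m J nb t h *\<^sub>v x) \<le> U / nl * scalar_prod x x"
    unfolding xSx xx sum_distrib_left by (intro sum_mono) (rule upb, simp)
  ultimately show ?thesis unfolding L_def U_def by simp
qed

lemma Smat_sym: "p < m*J \<Longrightarrow> q < m*J \<Longrightarrow> Smat f F m J nb t h $$ (p,q) = Smat f F m J nb t h $$ (q,p)"
proof -
  assume p: "p < m*J" and q: "q < m*J"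
  then have J: "J > 0" by (cases J) auto
  then have "p mod J < J" "q mod J < J" by auto
  then show ?thesis using p q unfolding Smat_def Rmat_def by (auto simp: ac_simps)
qed




lemma sp_pos: "x \<in> carrier_vec N \<Longrightarrow> x \<noteq> 0\<^sub>v N \<Longrightarrow> 0 < scalar_prod x (x :: real vec)"
proof -
  assume x: "x \<in> carrier_vec N" and nz: "x \<noteq> 0\<^sub>v N"
  then obtain i where i: "i < N" "vec_index x i \<noteq> 0" by (auto simp: vec_eq_iff)
  have "(vec_index x i)\<^sup>2 \<le> (\<Sum>p<N. (vec_index x p)\<^sup>2)"
    by (rule member_le_sum) (use i in auto)
  moreover have "0 < (vec_index x i)\<^sup>2" using i by simp
  ultimately show ?thesis using sp_self[OF x] by linarith
qed

lemma sp_nonneg: "0 \<le> scalar_prod x (x :: real vec)"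
  using sp_self[of x "dim_vec x"] by (simp add: sum_nonneg)

lemma minv_inverse:
  fixes S :: "real mat"
  assumes S: "S \<in> carrier_mat N N"
    and pd: "\<And>x. x \<in> carrier_vec N \<Longrightarrow> x \<noteq> 0\<^sub>v N \<Longrightarrow> 0 < scalar_prod x (S *\<^sub>v x)"
  shows "minv S \<in> carrier_mat N N \<and> S * minv S = 1\<^sub>m N"
proof -
  have "det S \<noteq> 0"
  proof
    assume "det S = 0"
    then obtain v where v: "v \<in> carrier_vec N" "v \<noteq> 0\<^sub>v N" "S *\<^sub>v v = 0\<^sub>v N"
      using det_0_iff_vec_prod_zero[OF S] by blast
    have "scalar_prod v (S *\<^sub>v v) = 0" using v by simp
    with pd[OF v(1,2)] show False by simp
  qed
  from det_non_zero_imp_unit[OF S this, of "()"]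
  obtain B where B: "B \<in> carrier_mat N N" "S * B = 1\<^sub>m N" "B * S = 1\<^sub>m N"
    unfolding Units_def ring_mat_def by auto
  have "minv S = B"
    unfolding minv_def
  proof (rule the_equality)
    show "B \<in> carrier_mat (dim_row S) (dim_row S) \<and> S * B = 1\<^sub>m (dim_row S) \<and> B * S = 1\<^sub>m (dim_row S)"
      using B S by simp
  next
    fix B' assume B': "B' \<in> carrier_mat (dim_row S) (dim_row S) \<and> S * B' = 1\<^sub>m (dim_row S) \<and> B' * S = 1\<^sub>m (dim_row S)"
    then have B'c: "B' \<in> carrier_mat N N" "B' * S = 1\<^sub>m N" using S by auto
    have "B' = B' * (S * B)" by (metis B(2) B'c(1) right_mult_one_mat)
    also have "\<dots> = (B' * S) * B" using assoc_mult_mat[OF B'c(1) S B(1)] by simp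
    also have "\<dots> = B" by (metis B'c(2) B(1) left_mult_one_mat)
    finally show "B' = B" .
  qed
  then show ?thesis using B by simp
qed

lemma opt:
  fixes S :: "real mat" and one qv v wv :: "real vec"
  assumes S: "S \<in> carrier_mat N N"
    and sym: "\<And>p q. p < N \<Longrightarrow> q < N \<Longrightarrow> S $$ (p,q) = S $$ (q,p)"
    and lo: "\<And>x. x \<in> carrier_vec N \<Longrightarrow> L * scalar_prod x x \<le> scalar_prod x (S *\<^sub>v x)"
    and up: "\<And>x. x \<in> carrier_vec N \<Longrightarrow> scalar_prod x (S *\<^sub>v x) \<le> U * scalar_prod x x"
    and L: "L > 0"
    and one: "one \<in> carrier_vec N" and qv: "qv \<in> carrier_vec N" and v: "v \<in> carrier_vec N"
    and wdef: "wv = (1 / (scalar_prod (minv S *\<^sub>v qv) qv * scalar_prod (minv S *\<^sub>v one) one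
                    - (scalar_prod (minv S *\<^sub>v qv) one)\<^sup>2)) \<cdot>\<^sub>v
                 (scalar_prod (minv S *\<^sub>v qv) qv \<cdot>\<^sub>v (minv S *\<^sub>v one)
                  - scalar_prod (minv S *\<^sub>v qv) one \<cdot>\<^sub>v (minv S *\<^sub>v qv))"
    and w1: "scalar_prod wv one = 1" and wq: "scalar_prod wv qv = 0"
    and v1: "scalar_prod v one = 1" and vq: "scalar_prod v qv = 0"
  shows "L * scalar_prod wv wv \<le> U * scalar_prod v v"
proof -
  define Si where "Si = minv S"
  define c1 where "c1 = scalar_prod (Si *\<^sub>v qv) qv"
  define c2 where "c2 = scalar_prod (Si *\<^sub>v qv) one"
  define c3 where "c3 = scalar_prod (Si *\<^sub>v one) one"
  define D where "D = c1 * c3 - c2\<^sup>2"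
  have pd: "0 < scalar_prod x (S *\<^sub>v x)" if "x \<in> carrier_vec N" "x \<noteq> 0\<^sub>v N" for x
    using lo[OF that(1)] sp_pos[OF that] L by (smt (verit) mult_pos_pos)
  have Si: "Si \<in> carrier_mat N N" "S * Si = 1\<^sub>m N"
    using minv_inverse[OF S pd] unfolding Si_def by auto
  have d1: "S *\<^sub>v (Si *\<^sub>v one) = one" using Si S one by (simp flip: assoc_mult_mat_vec)
  have d2: "S *\<^sub>v (Si *\<^sub>v qv) = qv" using Si S qv by (simp flip: assoc_mult_mat_vec)
  have wdef': "wv = (1 / D) \<cdot>\<^sub>v (c1 \<cdot>\<^sub>v (Si *\<^sub>v one) - c2 \<cdot>\<^sub>v (Si *\<^sub>v qv))"
    using wdef unfolding D_def c1_def c2_def c3_def Si_def by simp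
  have wc: "wv \<in> carrier_vec N" using wdef' Si one qv by simp
  have Sw: "S *\<^sub>v wv = (1 / D) \<cdot>\<^sub>v (c1 \<cdot>\<^sub>v one - c2 \<cdot>\<^sub>v qv)"
  proof -
    have c: "Si *\<^sub>v one \<in> carrier_vec N" "Si *\<^sub>v qv \<in> carrier_vec N" using Si one qv by auto
    have "S *\<^sub>v wv = (1 / D) \<cdot>\<^sub>v (S *\<^sub>v (c1 \<cdot>\<^sub>v (Si *\<^sub>v one) - c2 \<cdot>\<^sub>v (Si *\<^sub>v qv)))"
      unfolding wdef' using c S by (intro mult_mat_vec) auto
    also have "S *\<^sub>v (c1 \<cdot>\<^sub>v (Si *\<^sub>v one) - c2 \<cdot>\<^sub>v (Si *\<^sub>v qv))
       = S *\<^sub>v (c1 \<cdot>\<^sub>v (Si *\<^sub>v one)) - S *\<^sub>v (c2 \<cdot>\<^sub>v (Si *\<^sub>v qv))"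
      using c S by (intro mult_minus_distrib_mat_vec) auto
    also have "\<dots> = c1 \<cdot>\<^sub>v one - c2 \<cdot>\<^sub>v qv"
      using c S by (simp add: mult_mat_vec d1 d2)
    finally show ?thesis .
  qed
  define r where "r p = vec_index (S *\<^sub>v wv) p" for p
  have r: "r p = (1 / D) * (c1 * vec_index one p - c2 * vec_index qv p)" if "p < N" for p
    using that one qv unfolding r_def Sw by simp
  have r': "r p = (\<Sum>q<N. S $$ (p,q) * vec_index wv q)" if "p < N" for p
    using that S wc unfolding r_def by (simp add: scalar_prod_def row_def atLeast0LessThan mult.commute)
  define W where "W p = vec_index wv p" for p
  define u where "u p = vec_index v p - vec_index wv p" for p
  define B where "B x y = (\<Sum>p<N. \<Sum>q<N. S $$ (p,q) * x p * y q)" for x y :: "nat \<Rightarrow> real"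
  have u1: "(\<Sum>p<N. u p * vec_index one p) = 0"
    using v1 w1 v wc one by (simp add: u_def scalar_prod_def atLeast0LessThan algebra_simps sum_subtractf)
  have uq: "(\<Sum>p<N. u p * vec_index qv p) = 0"
    using vq wq v wc qv by (simp add: u_def scalar_prod_def atLeast0LessThan algebra_simps sum_subtractf)
  have Buw: "B u W = 0"
  proof -
    have "B u W = (\<Sum>p<N. u p * r p)"
      unfolding B_def W_def by (intro sum.cong refl) (simp add: r' sum_distrib_left algebra_simps)
    also have "\<dots> = (\<Sum>p<N. (1 / D) * (c1 * (u p * vec_index one p)) - (1 / D) * (c2 * (u p * vec_index qv p)))"
      by (intro sum.cong refl) (simp add: r algebra_simps)
    also have "\<dots> = (1 / D) * c1 * (\<Sum>p<N. u p * vec_index one p) - (1 / D) * c2 * (\<Sum>p<N. u p * vec_index qv p)"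
      by (simp add: sum_subtractf sum_distrib_left mult.assoc)
    finally show ?thesis using u1 uq by simp
  qed
  have Bwu: "B W u = B u W"
    unfolding B_def by (subst sum.swap) (intro sum.cong refl, simp add: sym mult.commute mult.left_commute)
  have Bvv: "B (\<lambda>p. vec_index v p) (\<lambda>p. vec_index v p) = B W W + B u W + B W u + B u u"
    unfolding B_def W_def u_def by (simp add: sum.distrib[symmetric] algebra_simps)
  have uc: "v - wv \<in> carrier_vec N" using v wc by simp
  have Buu: "0 \<le> B u u"
  proof -
    have "B u u = scalar_prod (v - wv) (S *\<^sub>v (v - wv))"
      using sp_mv[OF S uc uc] v wc unfolding B_def u_def by simp
    also have "\<dots> \<ge> L * scalar_prod (v - wv) (v - wv)" by (rule lo[OF uc])
    finally show ?thesis using sp_nonneg[of "v - wv"] L by (smt (verit) mult_nonneg_nonneg)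
  qed
  have "L * scalar_prod wv wv \<le> scalar_prod wv (S *\<^sub>v wv)" by (rule lo[OF wc])
  also have "\<dots> = B W W" using sp_mv[OF S wc wc] unfolding B_def W_def by simp
  also have "\<dots> \<le> B (\<lambda>p. vec_index v p) (\<lambda>p. vec_index v p)" using Bvv Buw Bwu Buu by simp
  also have "\<dots> = scalar_prod v (S *\<^sub>v v)" using sp_mv[OF S v v] unfolding B_def by simp
  also have "\<dots> \<le> U * scalar_prod v v" by (rule up[OF v])
  finally show ?thesis .
qed




lemma pairsum_id:
  fixes q :: "nat \<Rightarrow> real"
  shows "(\<Sum>p<N. \<Sum>p'<N. (q p - q p')\<^sup>2) = 2 * real N * (\<Sum>p<N. (q p)\<^sup>2) - 2 * (\<Sum>p<N. q p)\<^sup>2"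
  by (simp add: power2_diff sum.distrib sum_subtractf sum_distrib_left sum_distrib_right
      power2_eq_square sum_product algebra_simps)

lemma feas_v:
  fixes qs :: "nat \<Rightarrow> real"
  assumes N: "N \<ge> 1" and Qb: "\<And>p. p < N \<Longrightarrow> \<bar>qs p\<bar> \<le> Qb"
    and kap: "\<kappa> > 0" and sp: "\<kappa> * (real N)\<^sup>2 \<le> (\<Sum>p<N. \<Sum>p'<N. (qs p - qs p')\<^sup>2)"
  shows "\<exists>v. (\<Sum>p<N. v p) = 1 \<and> (\<Sum>p<N. v p * qs p) = 0 \<and> (\<Sum>p<N. (v p)\<^sup>2) \<le> (1 + 2 * Qb\<^sup>2 / \<kappa>) / real N"
proof -
  define s where "s = (\<Sum>p<N. qs p)"
  define qb where "qb = s / real N"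
  define V where "V = (\<Sum>p<N. (qs p - qb)\<^sup>2)"
  have Npos: "real N > 0" using N by simp
  have sq: "(\<Sum>p<N. qs p - qb) = 0" using Npos by (simp add: sum_subtractf qb_def s_def)
  have Vid0: "V = (\<Sum>p<N. (qs p)\<^sup>2) + real N * qb\<^sup>2 - 2 * qb * s"
  proof -
    have "V = (\<Sum>p<N. (qs p)\<^sup>2 + qb\<^sup>2 - 2 * qb * qs p)"
      unfolding V_def by (intro sum.cong refl) (simp add: power2_diff algebra_simps)
    also have "\<dots> = (\<Sum>p<N. (qs p)\<^sup>2) + real N * qb\<^sup>2 - 2 * qb * s"
      by (simp add: sum.distrib sum_subtractf sum_distrib_left[symmetric] s_def)
    finally show ?thesis .
  qed
  have Vid: "V = (\<Sum>p<N. (qs p)\<^sup>2) - s\<^sup>2 / real N"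
  proof -
    have a: "real N * qb\<^sup>2 = s\<^sup>2 / real N" using Npos by (simp add: qb_def power2_eq_square)
    have b: "2 * qb * s = 2 * (s\<^sup>2 / real N)" by (simp add: qb_def power2_eq_square)
    show ?thesis unfolding Vid0 a b by simp
  qed
  have V2: "2 * real N * V = (\<Sum>p<N. \<Sum>p'<N. (qs p - qs p')\<^sup>2)"
  proof -
    have a: "2 * real N * (s\<^sup>2 / real N) = 2 * s\<^sup>2" using Npos by simp
    have "2 * real N * V = 2 * real N * (\<Sum>p<N. (qs p)\<^sup>2) - 2 * real N * (s\<^sup>2 / real N)"
      unfolding Vid by (simp add: right_diff_distrib)
    then show ?thesis unfolding pairsum_id s_def[symmetric] a by simp
  qed
  have Vlow: "\<kappa> * real N / 2 \<le> V"
  proof -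
    have "\<kappa> * (real N)\<^sup>2 \<le> 2 * real N * V" using sp V2 by linarith
    moreover have "\<kappa> * (real N)\<^sup>2 = real N * (\<kappa> * real N)" "2 * real N * V = real N * (2 * V)"
      by (simp_all add: power2_eq_square)
    ultimately have "real N * (\<kappa> * real N) \<le> real N * (2 * V)" by simp
    then have "\<kappa> * real N \<le> 2 * V" using Npos by (simp only: mult_le_cancel_left_pos)
    then show ?thesis by simp
  qed
  have "\<kappa> * real N / 2 > 0" using kap Npos by simp
  then have Vpos: "V > 0" using Vlow by linarith
  have qbb: "\<bar>qb\<bar> \<le> Qb"
  proof -
    have "\<bar>s\<bar> \<le> (\<Sum>p<N. \<bar>qs p\<bar>)" unfolding s_def by (rule sum_abs)
    also have "\<dots> \<le> (\<Sum>p<N. Qb)" by (intro sum_mono) (simp add: Qb)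
    finally have "\<bar>s\<bar> \<le> real N * Qb" by simp
    then have "\<bar>s\<bar> / real N \<le> real N * Qb / real N" using Npos by (intro divide_right_mono) auto
    moreover have "\<bar>qb\<bar> = \<bar>s\<bar> / real N" using Npos by (simp add: qb_def)
    ultimately show ?thesis using Npos by simp
  qed
  define kk where "kk = qb / V"
  define v where "v p = 1 / real N - kk * (qs p - qb)" for p
  have sq0: "(\<Sum>p<N. kk * (qs p - qb)) = 0" by (simp only: sum_distrib_left[symmetric] sq mult_zero_right)
  have e1: "(\<Sum>p<N. v p) = 1"
  proof -
    have "(\<Sum>p<N. v p) = (\<Sum>p<N. 1 / real N) - (\<Sum>p<N. kk * (qs p - qb))"
      unfolding v_def by (simp only: sum_subtractf)
    then show ?thesis using Npos sq0 by simp
  qed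
  have Vq: "(\<Sum>p<N. (qs p - qb) * qs p) = V"
  proof -
    have "(\<Sum>p<N. (qs p - qb) * qs p) = (\<Sum>p<N. (qs p - qb)\<^sup>2) + qb * (\<Sum>p<N. qs p - qb)"
      by (simp add: sum_distrib_left sum.distrib[symmetric] power2_eq_square algebra_simps)
    then show ?thesis using sq by (simp add: V_def)
  qed
  have e2: "(\<Sum>p<N. v p * qs p) = 0"
  proof -
    have pt2: "v p * qs p = (1 / real N) * qs p - kk * ((qs p - qb) * qs p)" for p
      unfolding v_def by (simp add: algebra_simps)
    have "(\<Sum>p<N. v p * qs p) = (\<Sum>p<N. (1 / real N) * qs p) - (\<Sum>p<N. kk * ((qs p - qb) * qs p))"
      unfolding pt2 by (simp only: sum_subtractf)
    also have "\<dots> = (1 / real N) * s - kk * V"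
      by (simp only: sum_distrib_left[symmetric] Vq s_def)
    also have "\<dots> = 0" using Vpos by (simp add: kk_def qb_def)
    finally show ?thesis .
  qed
  have e3: "(\<Sum>p<N. (v p)\<^sup>2) = 1 / real N + qb\<^sup>2 / V"
  proof -
    have pt: "(v p)\<^sup>2 = (1 / (real N)\<^sup>2 - (2 / real N) * (kk * (qs p - qb))) + kk\<^sup>2 * (qs p - qb)\<^sup>2" for p
      unfolding v_def by (simp add: power2_eq_square algebra_simps)
    have "(\<Sum>p<N. (v p)\<^sup>2) = ((\<Sum>p<N. 1 / (real N)\<^sup>2) - (\<Sum>p<N. (2 / real N) * (kk * (qs p - qb))))
          + (\<Sum>p<N. kk\<^sup>2 * (qs p - qb)\<^sup>2)"
      unfolding pt by (simp only: sum.distrib sum_subtractf)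
    also have "\<dots> = real N / (real N)\<^sup>2 + kk\<^sup>2 * V"
      by (simp only: sum_distrib_left[symmetric] sq0 V_def) (simp add: sq)
    also have "\<dots> = 1 / real N + qb\<^sup>2 / V"
      using Vpos Npos by (simp add: power2_eq_square kk_def)
    finally show ?thesis .
  qed
  have "qb\<^sup>2 / V \<le> Qb\<^sup>2 / (\<kappa> * real N / 2)"
  proof (rule frac_le)
    show "qb\<^sup>2 \<le> Qb\<^sup>2" using qbb by (metis abs_ge_zero power2_abs power_mono)
  qed (use Vlow kap Npos in auto)
  also have "\<dots> = 2 * Qb\<^sup>2 / \<kappa> / real N" by (simp add: field_simps)
  finally have "(\<Sum>p<N. (v p)\<^sup>2) \<le> (1 + 2 * Qb\<^sup>2 / \<kappa>) / real N"
    using e3 by (simp add: add_divide_distrib)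
  then show ?thesis using e1 e2 by blast
qed

lemma sum_nat_sq: "(\<Sum>p<N. real p) = real N * (real N - 1) / 2"
  by (induction N) (auto simp: field_simps)

lemma sum_nat_sq2: "(\<Sum>p<N. (real p)\<^sup>2) = (real N - 1) * real N * (2 * real N - 1) / 6"
  by (induction N) (auto simp: field_simps power2_eq_square)

lemma pairsum_nat: "(\<Sum>p<N. \<Sum>p'<N. (real p - real p')\<^sup>2) = (real N)\<^sup>2 * ((real N)\<^sup>2 - 1) / 6"
  unfolding pairsum_id[of "\<lambda>p. real p"] sum_nat_sq sum_nat_sq2
  by (simp add: field_simps power2_eq_square)

lemma sigma_bij:
  fixes m J :: nat
  shows "bij_betw (\<lambda>p. p div J + m * (p mod J)) {..<m*J} {..<m*J}"
proof -
  let ?s = "\<lambda>p. p div J + m * (p mod J)"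
  have img: "?s ` {..<m*J} \<subseteq> {..<m*J}"
  proof
    fix y assume "y \<in> ?s ` {..<m*J}"
    then obtain p where p: "p < m*J" "y = ?s p" by auto
    then have J: "J > 0" by (cases J) auto
    have "p div J < m" using p J by (simp add: div_less_iff_less_mult mult.commute)
    moreover have "p mod J \<le> J - 1" using J mod_less_divisor[of J p] by linarith
    ultimately have "p div J + m * (p mod J) < m + m * (J - 1)" by (intro add_less_le_mono) auto
    also have "\<dots> = m * J" using J by (cases J) (auto simp: algebra_simps)
    finally show "y \<in> {..<m*J}" using p by simp
  qed
  have inj: "inj_on ?s {..<m*J}"
  proof (rule inj_onI)
    fix p p' assume p: "p \<in> {..<m*J}" and p': "p' \<in> {..<m*J}" and e: "?s p = ?s p'"
    have J: "J > 0" using p by (cases J) auto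
    have d: "p div J < m" "p' div J < m" using p p' J by (auto simp: div_less_iff_less_mult mult.commute)
    have "?s p mod m = p div J" "?s p' mod m = p' div J" using d by auto
    then have 1: "p div J = p' div J" using e by simp
    have "?s p div m = p mod J" "?s p' div m = p' mod J" using d by auto
    then have 2: "p mod J = p' mod J" using e by simp
    show "p = p'" using 1 2 by (metis div_mult_mod_eq)
  qed
  have "?s ` {..<m*J} = {..<m*J}" by (rule endo_inj_surj[OF _ img inj]) simp
  then show ?thesis using inj by (simp add: bij_betw_def)
qed




lemma sum_ij_p:
  fixes G :: "nat \<Rightarrow> nat \<Rightarrow> real"
  shows "(\<Sum>i=1..m. \<Sum>j=1..J. G i j) = (\<Sum>p<m*J. G (p div J + 1) (p mod J + 1))"
proof -
  have "(\<Sum>p<m*J. G (p div J + 1) (p mod J + 1)) = (\<Sum>i<m. \<Sum>a<J. G ((i*J+a) div J + 1) ((i*J+a) mod J + 1))"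
    by (rule sum_blocks)
  also have "\<dots> = (\<Sum>i<m. \<Sum>a<J. G (i + 1) (a + 1))"
    by (intro sum.cong refl) (simp add: div_mod_block)
  also have "\<dots> = (\<Sum>i=1..m. \<Sum>j=1..J. G i j)"
    by (simp add: sum.atLeast1_atMost_eq)
  finally show ?thesis by simp
qed

lemma cs_sum:
  fixes x :: "nat \<Rightarrow> real"
  shows "(\<Sum>p<N. x p)\<^sup>2 \<le> real N * (\<Sum>p<N. (x p)\<^sup>2)"
proof -
  have "0 \<le> (\<Sum>p<N. \<Sum>p'<N. (x p - x p')\<^sup>2)" by (intro sum_nonneg) auto
  then show ?thesis unfolding pairsum_id by simp
qed

lemma pairsum_sigma:
  fixes m J :: nat
  shows "(\<Sum>p<m*J. \<Sum>p'<m*J. (real (p div J + m * (p mod J)) - real (p' div J + m * (p' mod J)))\<^sup>2)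
       = (\<Sum>p<m*J. \<Sum>p'<m*J. (real p - real p')\<^sup>2)"
proof -
  let ?s = "\<lambda>p. p div J + m * (p mod J)"
  have b: "bij_betw ?s {..<m*J} {..<m*J}" by (rule sigma_bij)
  have "(\<Sum>p<m*J. \<Sum>p'<m*J. (real (?s p) - real (?s p'))\<^sup>2) = (\<Sum>p<m*J. \<Sum>p'<m*J. (real (?s p) - real p')\<^sup>2)"
    by (rule sum.cong[OF refl], rule sum.reindex_bij_betw[OF b])
  also have "\<dots> = (\<Sum>p<m*J. \<Sum>p'<m*J. (real p - real p')\<^sup>2)"
    by (rule sum.reindex_bij_betw[OF b, of "\<lambda>p. \<Sum>p'<m*J. (real p - real p')\<^sup>2"])
  finally show ?thesis .
qed

lemma per_k:
  fixes f F :: "real \<Rightarrow> real" and mk J :: nat and nbk :: "nat \<Rightarrow> nat" and hk :: "nat \<Rightarrow> nat \<Rightarrow> real"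
    and tbk dt dtau a0 b0 fmin fmax Qb c C H P Mb Mw :: real
  defines "tk \<equiv> tau_grid mk J dt tbk"
  defines "wk \<equiv> omega_star f F mk J nbk tk hk"
  assumes mk: "mk \<ge> 1" and J: "J \<ge> 1" and dt: "dt > 0" and dtau: "dtau > 0"
    and qf: "\<And>\<tau>. dtau < \<tau> \<Longrightarrow> \<tau> < 1 - dtau \<Longrightarrow> quantile F \<tau> \<in> {a0..b0} \<and> F (quantile F \<tau>) = \<tau>"
    and fb: "\<And>u. u \<in> {a0..b0} \<Longrightarrow> fmin \<le> f u \<and> f u \<le> fmax" and fmin: "fmin > 0"
    and Flip: "\<And>x y. x \<in> {a0..b0} \<Longrightarrow> y \<in> {a0..b0} \<Longrightarrow> \<bar>F y - F x\<bar> \<le> fmax * \<bar>y - x\<bar>"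
    and Qb: "\<And>u. u \<in> {a0..b0} \<Longrightarrow> \<bar>u\<bar> \<le> Qb"
    and tau: "\<forall>i\<in>{1..mk}. \<forall>j\<in>{1..J}. dtau < tk i j \<and> tk i j < 1 - dtau"
    and s1: "(\<Sum>i=1..mk. \<Sum>j=1..J. wk i j) = 1"
    and sq: "(\<Sum>i=1..mk. \<Sum>j=1..J. wk i j * quantile F (tk i j)) = 0"
    and winf: "\<forall>i\<in>{1..mk}. \<forall>j\<in>{1..J}. \<bar>wk i j\<bar> < Mw"
    and hb: "\<forall>i\<in>{1..mk}. \<forall>j\<in>{1..J}. c * H \<le> hk i j \<and> hk i j \<le> C * H"
    and c: "c > 0" and C: "C > 0" and H: "H > 0"
    and nbb: "\<forall>i\<in>{1..mk}. Mb powr (-2) * P < real (nbk i) \<and> real (nbk i) < Mb\<^sup>2 * P"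
    and P: "P > 0" and Mb: "Mb > 0"
  shows "(\<Sum>i=1..mk. \<Sum>j=1..J. (wk i j)\<^sup>2) \<le>
    max (4 * real J * C * fmax\<^sup>2 * Mb\<^sup>2 / (c * fmin\<^sup>2 * min dtau (dt / real J) * Mb powr (-2))
          * (1 + 2 * Qb\<^sup>2 / (dt\<^sup>2 / (8 * fmax\<^sup>2)))) (Mw\<^sup>2) / real mk"
proof -
  define N where "N = mk * J"
  define S where "S = Smat f F mk J nbk tk hk"
  define one where "one = stackv mk J (\<lambda>_ _. 1)"
  define qv where "qv = stackv mk J (\<lambda>a b. quantile F (tk a b))"
  define WV where "WV = (1 / (scalar_prod (minv S *\<^sub>v qv) qv * scalar_prod (minv S *\<^sub>v one) one
                    - (scalar_prod (minv S *\<^sub>v qv) one)\<^sup>2)) \<cdot>\<^sub>v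
                 (scalar_prod (minv S *\<^sub>v qv) qv \<cdot>\<^sub>v (minv S *\<^sub>v one)
                  - scalar_prod (minv S *\<^sub>v qv) one \<cdot>\<^sub>v (minv S *\<^sub>v qv))"
  have wk_eq: "wk i j = vec_index WV ((i - 1) * J + (j - 1))" for i j
    unfolding wk_def omega_star_def WV_def S_def one_def qv_def Let_def by simp
  have pdiv: "p div J < mk" if "p < N" for p
    using that J by (simp add: N_def div_less_iff_less_mult mult.commute)
  have pmod: "p mod J < J" for p using J by simp
  have wkp: "wk (Suc (p div J)) (Suc (p mod J)) = vec_index WV p" for p
    by (simp add: wk_eq)
  have onec: "one \<in> carrier_vec N" and qvc: "qv \<in> carrier_vec N"
    unfolding one_def qv_def stackv_def N_def by auto
  have onep: "vec_index one p = 1" if "p < N" for p using that unfolding one_def stackv_def N_def by simp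
  have qvp: "vec_index qv p = quantile F (tk (p div J + 1) (p mod J + 1))" if "p < N" for p
    using that unfolding qv_def stackv_def N_def by simp
  have Sc: "S \<in> carrier_mat N N" unfolding S_def N_def by (rule Smat_carrier)
  have t11: "dtau < tk 1 1 \<and> tk 1 1 < 1 - dtau" using tau mk J by auto
  have ab: "a0 \<le> b0" and fmm: "fmin \<le> fmax"
    using qf[of "tk 1 1"] t11 fb[of "quantile F (tk 1 1)"] by auto
  have fmax: "fmax > 0" using fmm fmin by linarith
  define g where "g = min dtau (dt / real J)"
  have g: "g > 0" using dtau dt J by (simp add: g_def)
  have step: "tk i (j+1) = tk i j + dt / real J" for i j
    using mk J unfolding tk_def tau_grid_def by (simp add: field_simps)
  have tg: "\<forall>i\<in>{1..mk}. g \<le> tk i 1 \<and> tk i J + g \<le> 1 \<and> (\<forall>j. 1 \<le> j \<longrightarrow> j < J \<longrightarrow> tk i j + g \<le> tk i (j+1))"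
  proof (intro ballI conjI allI impI)
    fix i assume i: "i \<in> {1..mk}"
    show "g \<le> tk i 1" using tau i J g_def by force
    show "tk i J + g \<le> 1" using tau i J g_def by force
    fix j show "tk i j + g \<le> tk i (j+1)" unfolding step g_def by simp
  qed
  have tpos: "\<forall>i\<in>{1..mk}. \<forall>j\<in>{1..J}. 0 < tk i j \<and> tk i j < 1" using tau dtau by fastforce
  have fbq: "\<forall>i\<in>{1..mk}. \<forall>j\<in>{1..J}. fmin \<le> f (quantile F (tk i j)) \<and> f (quantile F (tk i j)) \<le> fmax"
    using tau qf fb by blast
  have nbb': "\<forall>i\<in>{1..mk}. Mb powr (-2) * P \<le> real (nbk i) \<and> real (nbk i) \<le> Mb\<^sup>2 * P"
    using nbb by (auto intro: less_imp_le)
  have nl: "Mb powr (-2) * P > 0" using Mb P by simp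
  define L where "L = g / (4 * (C * H) * fmax\<^sup>2) / (Mb\<^sup>2 * P)"
  define U where "U = real J / ((c * H) * fmin\<^sup>2) / (Mb powr (-2) * P)"
  have LU: "L * scalar_prod x x \<le> scalar_prod x (S *\<^sub>v x) \<and> scalar_prod x (S *\<^sub>v x) \<le> U * scalar_prod x x"
    if x: "x \<in> carrier_vec N" for x
    using Smat_quad[OF J g tg tpos fbq fmin hb _ nbb' nl, of x] c H x
    unfolding L_def U_def S_def N_def by simp
  have L0: "L > 0" unfolding L_def using g C H fmax Mb P by simp
  have pd: "0 < scalar_prod x (S *\<^sub>v x)" if "x \<in> carrier_vec N" "x \<noteq> 0\<^sub>v N" for x
    using LU[OF that(1)] sp_pos[OF that] L0 by (meson mult_pos_pos order_less_le_trans)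
  have Si: "minv S \<in> carrier_mat N N" using minv_inverse[OF Sc pd] by simp
  have WVc: "WV \<in> carrier_vec N" using Si onec qvc unfolding WV_def by simp
  have sumWV: "(\<Sum>i=1..mk. \<Sum>j=1..J. G (wk i j) (quantile F (tk i j))) = (\<Sum>p<N. G (vec_index WV p) (vec_index qv p))"
    for G :: "real \<Rightarrow> real \<Rightarrow> real"
    unfolding sum_ij_p N_def by (intro sum.cong refl) (simp add: wkp qvp N_def)
  have w1: "scalar_prod WV one = 1"
  proof -
    have "scalar_prod WV one = (\<Sum>p<N. vec_index WV p)"
      using onec onep by (simp add: scalar_prod_def atLeast0LessThan)
    also have "\<dots> = 1" using sumWV[of "\<lambda>w q. w"] s1 by simp
    finally show ?thesis .
  qed
  have wq: "scalar_prod WV qv = 0"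
  proof -
    have "scalar_prod WV qv = (\<Sum>p<N. vec_index WV p * vec_index qv p)"
      using qvc by (simp add: scalar_prod_def atLeast0LessThan)
    also have "\<dots> = 0" using sumWV[of "\<lambda>w q. w * q"] sq by simp
    finally show ?thesis .
  qed
  have ww: "(\<Sum>i=1..mk. \<Sum>j=1..J. (wk i j)\<^sup>2) = scalar_prod WV WV"
    using sumWV[of "\<lambda>w q. w\<^sup>2"] sp_self[OF WVc] by simp
  define R0 where "R0 = 4 * real J * C * fmax\<^sup>2 * Mb\<^sup>2 / (c * fmin\<^sup>2 * min dtau (dt / real J) * Mb powr (-2))"
  define \<kappa> where "\<kappa> = dt\<^sup>2 / (8 * fmax\<^sup>2)"
  define Cw where "Cw = max (R0 * (1 + 2 * Qb\<^sup>2 / \<kappa>)) (Mw\<^sup>2)"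
  have Nm: "real mk \<le> real N" using J unfolding N_def of_nat_le_iff by simp
  have mk0: "real mk > 0" using mk by simp
  show ?thesis
  proof (cases "N \<ge> 2")
    case False
    then have N1: "N = 1" using mk J unfolding N_def
      by (metis One_nat_def less_2_cases_iff linorder_not_le mult_is_0 not_one_le_zero)
    then have "mk = 1" "J = 1" unfolding N_def by auto
    then have "(\<Sum>i=1..mk. \<Sum>j=1..J. (wk i j)\<^sup>2) = (wk 1 1)\<^sup>2" by simp
    also have "\<dots> \<le> Mw\<^sup>2"
    proof -
      have "\<bar>wk 1 1\<bar> < Mw" using winf \<open>mk = 1\<close> \<open>J = 1\<close> by simp
      then have "\<bar>wk 1 1\<bar>\<^sup>2 \<le> Mw\<^sup>2" by (intro power_mono) auto
      then show ?thesis by simp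
    qed
    also have "\<dots> \<le> Cw / real mk" using \<open>mk = 1\<close> by (simp add: Cw_def)
    finally show ?thesis unfolding Cw_def R0_def \<kappa>_def .
  next
    case True
    define qs where "qs p = vec_index qv p" for p
    define ts where "ts p = tk (Suc (p div J)) (Suc (p mod J))" for p
    have tsr: "dtau < ts p \<and> ts p < 1 - dtau" if "p < N" for p
      using tau pdiv[OF that] pmod[of p] unfolding ts_def by auto
    have qin: "qs p \<in> {a0..b0} \<and> F (qs p) = ts p" if "p < N" for p
      using qf tsr[OF that] qvp[OF that] unfolding qs_def ts_def by simp
    have Qbp: "\<bar>qs p\<bar> \<le> Qb" if "p < N" for p using Qb qin[OF that] by blast
    have sp1: "(ts p - ts p')\<^sup>2 \<le> fmax\<^sup>2 * (qs p - qs p')\<^sup>2" if "p < N" "p' < N" for p p'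
    proof -
      have "\<bar>ts p - ts p'\<bar> \<le> fmax * \<bar>qs p - qs p'\<bar>"
        using Flip[of "qs p'" "qs p"] qin[OF that(1)] qin[OF that(2)] by simp
      then have "\<bar>ts p - ts p'\<bar>\<^sup>2 \<le> (fmax * \<bar>qs p - qs p'\<bar>)\<^sup>2" by (intro power_mono) auto
      then show ?thesis by (simp add: power_mult_distrib)
    qed
    have tdiff: "ts p - ts p' = dt / (real mk * real J) *
        (real (p div J + mk * (p mod J)) - real (p' div J + mk * (p' mod J)))" for p p'
      using mk J unfolding ts_def tk_def tau_grid_def by (simp add: field_simps)
    have sumt: "(\<Sum>p<N. \<Sum>p'<N. (ts p - ts p')\<^sup>2) = dt\<^sup>2 * ((real N)\<^sup>2 - 1) / 6"
    proof -
      have "(\<Sum>p<N. \<Sum>p'<N. (ts p - ts p')\<^sup>2) = (dt / real N)\<^sup>2 *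
          (\<Sum>p<N. \<Sum>p'<N. (real (p div J + mk * (p mod J)) - real (p' div J + mk * (p' mod J)))\<^sup>2)"
        unfolding tdiff power_mult_distrib N_def of_nat_mult sum_distrib_left by (rule refl)
      also have "\<dots> = (dt / real N)\<^sup>2 * ((real N)\<^sup>2 * ((real N)\<^sup>2 - 1) / 6)"
        unfolding N_def pairsum_sigma pairsum_nat by simp
      also have "\<dots> = dt\<^sup>2 * ((real N)\<^sup>2 - 1) / 6" using True by (simp add: power_divide)
      finally show ?thesis .
    qed
    have kap: "\<kappa> > 0" unfolding \<kappa>_def using dt fmax by simp
    have spread: "\<kappa> * (real N)\<^sup>2 \<le> (\<Sum>p<N. \<Sum>p'<N. (qs p - qs p')\<^sup>2)"
    proof -
      have "dt\<^sup>2 * ((real N)\<^sup>2 - 1) / 6 \<le> (\<Sum>p<N. \<Sum>p'<N. fmax\<^sup>2 * (qs p - qs p')\<^sup>2)"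
        unfolding sumt[symmetric] by (intro sum_mono sp1) auto
      also have "\<dots> = fmax\<^sup>2 * (\<Sum>p<N. \<Sum>p'<N. (qs p - qs p')\<^sup>2)" by (simp add: sum_distrib_left)
      finally have a: "dt\<^sup>2 * ((real N)\<^sup>2 - 1) / 6 \<le> fmax\<^sup>2 * (\<Sum>p<N. \<Sum>p'<N. (qs p - qs p')\<^sup>2)" .
      have "2 \<le> real N" using True by simp
      then have "2\<^sup>2 \<le> (real N)\<^sup>2" by (intro power_mono) auto
      then have "(real N)\<^sup>2 / 8 \<le> ((real N)\<^sup>2 - 1) / 6" by simp
      then have b: "dt\<^sup>2 * ((real N)\<^sup>2 / 8) \<le> dt\<^sup>2 * (((real N)\<^sup>2 - 1) / 6)" by (intro mult_left_mono) auto
      have e: "fmax\<^sup>2 * (\<kappa> * (real N)\<^sup>2) = dt\<^sup>2 * ((real N)\<^sup>2 / 8)"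
        unfolding \<kappa>_def using fmax by (simp add: field_simps)
      have "fmax\<^sup>2 * (\<kappa> * (real N)\<^sup>2) \<le> fmax\<^sup>2 * (\<Sum>p<N. \<Sum>p'<N. (qs p - qs p')\<^sup>2)"
        using a b unfolding e by simp
      moreover have "fmax\<^sup>2 > 0" using fmax by simp
      ultimately show ?thesis by (simp only: mult_le_cancel_left_pos)
    qed
    obtain vf where vf: "(\<Sum>p<N. vf p) = 1" "(\<Sum>p<N. vf p * qs p) = 0"
      "(\<Sum>p<N. (vf p)\<^sup>2) \<le> (1 + 2 * Qb\<^sup>2 / \<kappa>) / real N"
      using feas_v[of N qs Qb \<kappa>] True Qbp kap spread by auto
    define v where "v = vec N vf"
    have vc: "v \<in> carrier_vec N" unfolding v_def by simp
    have v1: "scalar_prod v one = 1" using vf(1) onep onec unfolding v_def by (simp add: scalar_prod_def atLeast0LessThan)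
    have vq: "scalar_prod v qv = 0" using vf(2) qvc unfolding v_def qs_def by (simp add: scalar_prod_def atLeast0LessThan)
    have vv: "scalar_prod v v \<le> (1 + 2 * Qb\<^sup>2 / \<kappa>) / real N"
      using vf(3) sp_self[OF vc] unfolding v_def by simp
    have sym: "\<And>p q. p < N \<Longrightarrow> q < N \<Longrightarrow> S $$ (p,q) = S $$ (q,p)"
      unfolding S_def N_def by (rule Smat_sym)
    have main: "L * scalar_prod WV WV \<le> U * scalar_prod v v"
      by (rule opt[OF Sc sym _ _ L0 onec qvc vc WV_def w1 wq v1 vq]) (use LU in auto)
    have UL: "U = R0 * L"
    proof -
      have gne: "min dtau (dt / real J) \<noteq> 0" using g unfolding g_def by linarith
      show ?thesis
      unfolding U_def L_def R0_def g_def using c C H P Mb fmin fmax J gne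
      by (simp add: field_simps)
    qed
    have "scalar_prod WV WV \<le> R0 * scalar_prod v v"
      using main L0 unfolding UL by (simp add: mult.assoc mult_le_cancel_left_pos)
    also have "\<dots> \<le> R0 * ((1 + 2 * Qb\<^sup>2 / \<kappa>) / real N)"
    proof (rule mult_left_mono[OF vv])
      show "0 \<le> R0" unfolding R0_def using C c fmin fmax Mb g[unfolded g_def] J by simp
    qed
    also have "\<dots> \<le> R0 * ((1 + 2 * Qb\<^sup>2 / \<kappa>) / real mk)"
    proof (rule mult_left_mono)
      show "0 \<le> R0" unfolding R0_def using C c fmin fmax Mb g[unfolded g_def] J by simp
      have "0 \<le> 1 + 2 * Qb\<^sup>2 / \<kappa>" using kap by simp
      then show "(1 + 2 * Qb\<^sup>2 / \<kappa>) / real N \<le> (1 + 2 * Qb\<^sup>2 / \<kappa>) / real mk"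
        using Nm mk0 by (intro divide_left_mono) auto
    qed
    also have "\<dots> \<le> Cw / real mk" unfolding Cw_def using mk0
      by (simp add: divide_right_mono)
    finally show ?thesis unfolding ww Cw_def R0_def \<kappa>_def .
  qed
qed

theorem corollary1:
  fixes J :: nat and m :: "nat \<Rightarrow> nat" and nb :: "nat \<Rightarrow> nat \<Rightarrow> nat"
    and h :: "nat \<Rightarrow> nat \<Rightarrow> nat \<Rightarrow> real" and tb :: "nat \<Rightarrow> real" and dt :: real
    and f f' F :: "real \<Rightarrow> real"
    and mreg sig fX K :: "real \<Rightarrow> real" and Ix :: "real set"
    and Mw dtau lmin lmax Mb s nu dK sK :: real
  defines "n \<equiv> \<lambda>k. real (ntot (m k) (nb k))"
  defines "tau \<equiv> \<lambda>k. tau_grid (m k) J dt (tb k)"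
  defines "w \<equiv> \<lambda>k. omega_star f F (m k) J (nb k) (tau k) (h k)"
  assumes asymp: "filterlim n at_top sequentially"
    and J_pos: "J \<ge> 1" and m_pos: "\<forall>k. m k \<ge> 1"
    \<comment> \<open>(A1): distribution of epsilon: density f, CDF F, mean 0, variance 1\<close>
    and f_pos: "\<forall>x. f x > 0"
    and f_dens: "(f has_integral 1) UNIV"
    and F_cdf: "\<forall>x. (f has_integral F x) {..x}"
    and eps_mean: "((\<lambda>x. x * f x) has_integral 0) UNIV"
    and eps_var: "((\<lambda>x. x\<^sup>2 * f x) has_integral 1) UNIV"
    and f_deriv: "\<forall>x. (f has_real_derivative f' x) (at x)"
    and f'_cont: "continuous_on UNIV f'" and f'_bdd: "bounded (range f')"
    \<comment> \<open>(A1): regularity of f_X, m, sigma on an open I_x in [0,1]\<close>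
    and Ix: "open Ix" "Ix \<subseteq> {0..1}"
    and fX_sig_pos: "\<forall>x\<in>Ix. fX x > 0 \<and> sig x > 0"
    and C2: "C2_on Ix fX" "C2_on Ix mreg" "C2_on Ix sig"
    \<comment> \<open>(A2): kernel\<close>
    and K_lip: "\<exists>L. L-lipschitz_on UNIV K"
    and K_nonneg: "\<forall>u. K u \<ge> 0"
    and K_supp: "\<exists>a. \<forall>u. \<bar>u\<bar> > a \<longrightarrow> K u = 0"
    and K_int: "(K has_integral 1) UNIV"
    and K_mom1: "((\<lambda>u. u * K u) has_integral 0) UNIV"
    and K_mom2: "(\<lambda>u. u\<^sup>2 * K u) integrable_on UNIV"
    and K_sq: "(\<lambda>u. (K u)\<^sup>2) integrable_on UNIV"
    and K_lower: "dK > 0" "sK > 0" "\<forall>u\<in>{-sK..sK}. K u \<ge> dK"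
    \<comment> \<open>(A3)\<close>
    and A3_consts: "Mw > 0" "0 < dtau" "dtau < 1/2" "0 < lmin" "lmin < lmax"
    and A3_sum1: "\<forall>k. (\<Sum>i=1..m k. \<Sum>j=1..J. w k i j) = 1"
    and A3_sumq: "\<forall>k. (\<Sum>i=1..m k. \<Sum>j=1..J. w k i j * quantile F (tau k i j)) = 0"
    and A3_inf: "\<forall>k. \<forall>i\<in>{1..m k}. \<forall>j\<in>{1..J}. \<bar>w k i j\<bar> < Mw"
    and A3_tau: "\<forall>k. \<forall>i\<in>{1..m k}. \<forall>j\<in>{1..J}. dtau < tau k i j \<and> tau k i j < 1 - dtau"
    and A3_eig: "\<forall>k. \<forall>i\<in>{1..m k}. \<forall>l. eigenvalue (R1mat f F J (tau k i)) l
                    \<longrightarrow> lmin < l \<and> l < lmax"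
    \<comment> \<open>(A4)\<close>
    and A4_consts: "Mb > 0" "2/3 < s" "s \<le> 1" "0 < nu" "nu < 3 - 2 / s"
    and A4_nb: "\<forall>k. \<forall>i\<in>{1..m k}.
                  Mb powr (-2) * n k powr s < real (nb k i) \<and> real (nb k i) < Mb\<^sup>2 * n k powr s"
    and h_pos: "\<forall>k i j. h k i j > 0"
    and A4_h: "\<exists>c C. 0 < c \<and> 0 < C \<and> (\<forall>\<^sub>F k in sequentially. \<forall>i\<in>{1..m k}. \<forall>j\<in>{1..J}.
                  c * n k powr (- s * nu) \<le> h k i j \<and> h k i j \<le> C * n k powr (- s * nu))"
    \<comment> \<open>choice of the centre of the quantile levels\<close>
    and dt_pos: "dt > 0"
    and tb_int: "\<forall>k. dtau \<le> tb k - dt / 2 \<and> tb k + dt / 2 \<le> 1 - dtau"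
    and tb_choice:
      "(\<forall>k. (\<Sum>i=1..m k. \<Sum>j=1..J. quantile F (tau k i j)) = 0)
       \<or> (\<forall>k. stackv (m k) J (\<lambda>_ _. 1) \<bullet>
               (minv (Smat f F (m k) J (nb k) (tau k) (\<lambda>i j. real (nb k i) powr (- nu)))
                 *\<^sub>v stackv (m k) J (\<lambda>i j. quantile F (tau k i j))) = 0)"
  shows "(\<lambda>k. \<Sum>i=1..m k. \<Sum>j=1..J. \<bar>w k i j\<bar>) \<in> O[sequentially](\<lambda>k. 1)
       \<and> (\<lambda>k. \<Sum>i=1..m k. \<Sum>j=1..J. (w k i j)\<^sup>2) \<in> \<Theta>[sequentially](\<lambda>k. 1 / real (m k))"
proof -
  have f_cont: "continuous_on UNIV f"
    by (intro continuous_at_imp_continuous_on ballI) (use f_deriv DERIV_isCont in blast)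
  interpret D: dens f F
    by unfold_locales (use f_pos F_cdf f_dens f_cont in auto)
  obtain a0 b0 where ab0: "F a0 < dtau" "1 - dtau < F b0" using D.F_tails[OF A3_consts(2)] by blast
  have ab: "a0 \<le> b0"
  proof (rule ccontr)
    assume "\<not> a0 \<le> b0"
    then have "F b0 \<le> F a0" using D.F_mono[of b0 a0] by simp
    then show False using ab0 A3_consts(3) by linarith
  qed
  have qf: "quantile F \<tau> \<in> {a0..b0} \<and> F (quantile F \<tau>) = \<tau>" if "dtau < \<tau>" "\<tau> < 1 - dtau" for \<tau>
    by (rule D.quantile_char[OF ab]) (use that ab0 in linarith)+
  have "\<exists>z\<in>{a0..b0}. \<forall>u\<in>{a0..b0}. f z \<le> f u"
    by (rule continuous_attains_inf) (use ab continuous_on_subset[OF f_cont] in auto)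
  then obtain zmin where zmin: "zmin \<in> {a0..b0}" "\<And>u. u \<in> {a0..b0} \<Longrightarrow> f zmin \<le> f u" by blast
  have "\<exists>z\<in>{a0..b0}. \<forall>u\<in>{a0..b0}. f u \<le> f z"
    by (rule continuous_attains_sup) (use ab continuous_on_subset[OF f_cont] in auto)
  then obtain zmax where zmax: "zmax \<in> {a0..b0}" "\<And>u. u \<in> {a0..b0} \<Longrightarrow> f u \<le> f zmax" by blast
  define fmin where "fmin = f zmin"
  define fmax where "fmax = f zmax"
  have fb: "fmin \<le> f u \<and> f u \<le> fmax" if "u \<in> {a0..b0}" for u
    using zmin zmax that unfolding fmin_def fmax_def by auto
  have fmin: "fmin > 0" using f_pos unfolding fmin_def by simp
  have Flip: "\<bar>F y - F x\<bar> \<le> fmax * \<bar>y - x\<bar>" if "x \<in> {a0..b0}" "y \<in> {a0..b0}" for x y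
    using D.F_lip[of a0 b0 fmax x y] fb that by blast
  define Qb where "Qb = max \<bar>a0\<bar> \<bar>b0\<bar>"
  have Qb: "\<bar>u\<bar> \<le> Qb" if "u \<in> {a0..b0}" for u using that unfolding Qb_def by auto
  obtain c C where cC: "0 < c" "0 < C" and evh: "\<forall>\<^sub>F k in sequentially. \<forall>i\<in>{1..m k}. \<forall>j\<in>{1..J}.
                  c * n k powr (- s * nu) \<le> h k i j \<and> h k i j \<le> C * n k powr (- s * nu)"
    using A4_h by blast
  define Cw where "Cw = max (4 * real J * C * fmax\<^sup>2 * Mb\<^sup>2 / (c * fmin\<^sup>2 * min dtau (dt / real J) * Mb powr (-2))
          * (1 + 2 * Qb\<^sup>2 / (dt\<^sup>2 / (8 * fmax\<^sup>2)))) (Mw\<^sup>2)"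
  have npos: "n k > 0" for k
  proof -
    have 1: "1 \<in> {1..m k}" using m_pos by auto
    have "0 \<le> Mb powr (-2) * n k powr s" by simp
    moreover have "Mb powr (-2) * n k powr s < real (nb k 1)" using A4_nb 1 by blast
    ultimately have "real (nb k 1) > 0" by linarith
    moreover have "real (nb k 1) \<le> n k"
      unfolding n_def ntot_def of_nat_le_iff by (rule member_le_sum) (use 1 in auto)
    ultimately show ?thesis by linarith
  qed
  have upper: "\<forall>\<^sub>F k in sequentially. (\<Sum>i=1..m k. \<Sum>j=1..J. (w k i j)\<^sup>2) \<le> Cw / real (m k)"
    using evh
  proof eventually_elim
    case (elim k)
    have t: "\<forall>i\<in>{1..m k}. \<forall>j\<in>{1..J}. dtau < tau_grid (m k) J dt (tb k) i j \<and> tau_grid (m k) J dt (tb k) i j < 1 - dtau"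
      using A3_tau unfolding tau_def by blast
    have s1: "(\<Sum>i=1..m k. \<Sum>j=1..J. omega_star f F (m k) J (nb k) (tau_grid (m k) J dt (tb k)) (h k) i j) = 1"
      using A3_sum1 unfolding tau_def w_def by blast
    have sq: "(\<Sum>i=1..m k. \<Sum>j=1..J. omega_star f F (m k) J (nb k) (tau_grid (m k) J dt (tb k)) (h k) i j
               * quantile F (tau_grid (m k) J dt (tb k) i j)) = 0"
      using A3_sumq unfolding tau_def w_def by blast
    have wi: "\<forall>i\<in>{1..m k}. \<forall>j\<in>{1..J}. \<bar>omega_star f F (m k) J (nb k) (tau_grid (m k) J dt (tb k)) (h k) i j\<bar> < Mw"
      using A3_inf unfolding tau_def w_def by blast
    have nb: "\<forall>i\<in>{1..m k}. Mb powr (-2) * n k powr s < real (nb k i) \<and> real (nb k i) < Mb\<^sup>2 * n k powr s"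
      using A4_nb by blast
    have H: "n k powr (- s * nu) > 0" and P: "n k powr s > 0" using npos[of k] by auto
    have mk: "1 \<le> m k" using m_pos by simp
    show ?case unfolding Cw_def w_def tau_def
      by (rule per_k[OF mk J_pos dt_pos A3_consts(2) qf fb fmin Flip Qb t s1 sq wi elim cC H nb P A4_consts(1)])
  qed
  have lower: "1 / (real J * real (m k)) \<le> (\<Sum>i=1..m k. \<Sum>j=1..J. (w k i j)\<^sup>2)" for k
  proof -
    have "1 = (\<Sum>p<m k * J. w k (p div J + 1) (p mod J + 1))\<^sup>2"
      using A3_sum1[rule_format, of k] unfolding sum_ij_p by simp
    also have "\<dots> \<le> real (m k * J) * (\<Sum>p<m k * J. (w k (p div J + 1) (p mod J + 1))\<^sup>2)"
      by (rule cs_sum)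
    also have "\<dots> = real (m k * J) * (\<Sum>i=1..m k. \<Sum>j=1..J. (w k i j)\<^sup>2)"
      unfolding sum_ij_p by simp
    finally have "1 \<le> real J * real (m k) * (\<Sum>i=1..m k. \<Sum>j=1..J. (w k i j)\<^sup>2)" by (simp add: mult.commute)
    moreover have "real J * real (m k) > 0" using J_pos m_pos[rule_format, of k] by simp
    ultimately show ?thesis by (simp add: divide_le_eq mult.commute)
  qed
  have l1: "\<forall>\<^sub>F k in sequentially. (\<Sum>i=1..m k. \<Sum>j=1..J. \<bar>w k i j\<bar>) \<le> sqrt (real J * Cw)"
    using upper
  proof eventually_elim
    case (elim k)
    have mk: "real (m k) > 0" using m_pos[rule_format, of k] by simp
    have "(\<Sum>i=1..m k. \<Sum>j=1..J. \<bar>w k i j\<bar>)\<^sup>2 = (\<Sum>p<m k * J. \<bar>w k (p div J + 1) (p mod J + 1)\<bar>)\<^sup>2"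
      unfolding sum_ij_p by simp
    also have "\<dots> \<le> real (m k * J) * (\<Sum>p<m k * J. \<bar>w k (p div J + 1) (p mod J + 1)\<bar>\<^sup>2)"
      by (rule cs_sum)
    also have "\<dots> = real (m k) * real J * (\<Sum>i=1..m k. \<Sum>j=1..J. (w k i j)\<^sup>2)"
      unfolding sum_ij_p by simp
    also have "\<dots> \<le> real (m k) * real J * (Cw / real (m k))"
      using elim by (intro mult_left_mono) auto
    also have "\<dots> = real J * Cw" using mk by simp
    finally have "(\<Sum>i=1..m k. \<Sum>j=1..J. \<bar>w k i j\<bar>)\<^sup>2 \<le> real J * Cw" .
    then have "sqrt ((\<Sum>i=1..m k. \<Sum>j=1..J. \<bar>w k i j\<bar>)\<^sup>2) \<le> sqrt (real J * Cw)"
      by (rule real_sqrt_le_mono)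
    moreover have "0 \<le> (\<Sum>i=1..m k. \<Sum>j=1..J. \<bar>w k i j\<bar>)" by (intro sum_nonneg) auto
    ultimately show ?case by simp
  qed
  have O1: "(\<lambda>k. \<Sum>i=1..m k. \<Sum>j=1..J. \<bar>w k i j\<bar>) \<in> O[sequentially](\<lambda>k. 1)"
  proof (rule bigoI)
    show "\<forall>\<^sub>F k in sequentially. norm (\<Sum>i=1..m k. \<Sum>j=1..J. \<bar>w k i j\<bar>) \<le> sqrt (real J * Cw) * norm (1::real)"
      using l1 by eventually_elim (simp add: sum_nonneg)
  qed
  have Cw0: "Cw > 0"
  proof -
    have "\<bar>w 0 1 1\<bar> < Mw" using A3_inf m_pos J_pos by force
    then have "Mw > 0" by linarith
    then show ?thesis unfolding Cw_def by (simp add: less_max_iff_disj)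
  qed
  have T2: "(\<lambda>k. \<Sum>i=1..m k. \<Sum>j=1..J. (w k i j)\<^sup>2) \<in> \<Theta>[sequentially](\<lambda>k. 1 / real (m k))"
  proof (rule bigthetaI'[of "1 / real J" Cw])
    show "0 < 1 / real J" using J_pos by simp
    show "0 < Cw" by (rule Cw0)
    show "\<forall>\<^sub>F k in sequentially. 1 / real J * norm (1 / real (m k)) \<le> norm (\<Sum>i=1..m k. \<Sum>j=1..J. (w k i j)\<^sup>2)
        \<and> norm (\<Sum>i=1..m k. \<Sum>j=1..J. (w k i j)\<^sup>2) \<le> Cw * norm (1 / real (m k))"
      using upper
    proof eventually_elim
      case (elim k)
      have nn: "0 \<le> (\<Sum>i=1..m k. \<Sum>j=1..J. (w k i j)\<^sup>2)" by (intro sum_nonneg) auto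
      show ?case using elim lower[of k] nn by simp
    qed
  qed
  show ?thesis using O1 T2 by blast
qed


end
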